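(* For every integer $n\ge 1$, the cubature formula $$\frac12\int_{\Omega_H}f(\mathbf t)\,d\mathbf t=\frac1{4n^3}\sum_{\mathbf j\in\mathbb H_n^*}c^{(n)}_{\mathbf j}f(\tfrac{\mathbf j}{4n})$$ is exact for all $f\in\mathcal T_{2n-1}$.
   Context: Let $\mathbb R^4_H=\{\mathbf t\in\mathbb R^4: t_1+t_2+t_3+t_4=0\}$ with its 3-dimensional Lebesgue measure $d\mathbf t$, $\mathbb Z^4_H=\mathbb Z^4\cap\mathbb R^4_H$, and $\Omega_H=\{\mathbf t\in\mathbb R^4_H: -1<t_i-t_j\le 1,\ 1\le i<j\le4\}$ (volume $2$). Let $\mathbb H=\{\mathbf k\in\mathbb Z^4_H: k_1\equiv k_2\equiv k_3\equiv k_4\pmod 4\}$, $\phi_{\mathbf k}(\mathbf t)=e^{\frac{\pi i}{2}\mathbf k\cdot\mathbf t}$, $\mathbb H_m^*=\{\mathbf k\in\mathbb H: -4m\le k_i-k_j\le 4m,\ 1\le i<j\le4\}$ and $\mathcal T_m=\operatorname{span}\{\phi_{\mathbf k}:\mathbf k\in\mathbb H_m^*\}$. For $\mathbf k\in\mathbb H_n^*$ define $c^{(n)}_{\mathbf k}=1$ if $\max_ik_i-\min_ik_i<4n$, and otherwise $c^{(n)}_{\mathbf k}=1/\binom{p+q}{p}$, where $p$ (resp. $q$) is the number of coordinates of $\mathbf k$ equal to $\max_i k_i$ (resp. $\min_ik_i$). *)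

theory Defs
  imports "HOL-Analysis.Analysis"
begin

definition hdot :: "int^4 \<Rightarrow> real^4 \<Rightarrow> real" where
  "hdot k t = (\<Sum>i\<in>UNIV. real_of_int (k$i) * t$i)"

definition phi :: "int^4 \<Rightarrow> real^4 \<Rightarrow> complex" where
  "phi k t = exp (\<i> * complex_of_real (pi / 2 * hdot k t))"

definition OmegaH :: "(real^4) set" where
  "OmegaH = {t. (\<Sum>i\<in>UNIV. t$i) = 0 \<and>
               (\<forall>i j. i < j \<longrightarrow> -1 < t$i - t$j \<and> t$i - t$j \<le> 1)}"

definition HH :: "(int^4) set" where
  "HH = {k. (\<Sum>i\<in>UNIV. k$i) = 0 \<and> (\<forall>i j. k$i mod 4 = k$j mod 4)}"

definition Hstar :: "nat \<Rightarrow> (int^4) set" where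
  "Hstar m = {k \<in> HH. \<forall>i j. i < j \<longrightarrow> - 4 * int m \<le> k$i - k$j \<and> k$i - k$j \<le> 4 * int m}"

definition Tm :: "nat \<Rightarrow> (real^4 \<Rightarrow> complex) set" where
  "Tm m = {f. \<exists>a :: int^4 \<Rightarrow> complex. f = (\<lambda>t. \<Sum>k\<in>Hstar m. a k * phi k t)}"

definition cw :: "nat \<Rightarrow> int^4 \<Rightarrow> real" where
  "cw n k = (let M = Max (range (\<lambda>i. k$i)); m = Min (range (\<lambda>i. k$i));
                 p = card {i. k$i = M}; q = card {i. k$i = m}
             in if M - m < 4 * int n then 1 else 1 / real ((p + q) choose p))"

definition liftH :: "real^3 \<Rightarrow> real^4" where
  "liftH x = vector [x$1, x$2, x$3, -(x$1 + x$2 + x$3)]"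

(* integral over Omega_H w.r.t. the 3-dimensional Lebesgue (induced Euclidean) measure
   on R^4_H; the Jacobian of liftH is sqrt 4 = 2 (so that vol Omega_H = 2). *)
definition intH :: "(real^4 \<Rightarrow> complex) \<Rightarrow> complex" where
  "intH f = 2 * integral {x. liftH x \<in> OmegaH} (\<lambda>x. f (liftH x))"

definition scaleH :: "nat \<Rightarrow> int^4 \<Rightarrow> real^4" where
  "scaleH n j = (\<chi> i. real_of_int (j$i) / (4 * real n))"

end

theory Submission
  imports Defs
begin


lemma vector_4 [simp]:
 "(vector [a,b,c,d] ::('a::zero)^4)$1 = a"
 "(vector [a,b,c,d] ::('a::zero)^4)$2 = b"
 "(vector [a,b,c,d] ::('a::zero)^4)$3 = c"
 "(vector [a,b,c,d] ::('a::zero)^4)$4 = d"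
  unfolding vector_def by simp_all

definition mxv :: "int^4 \<Rightarrow> int" where "mxv j = Max (range (\<lambda>i. j$i))"
definition mnv :: "int^4 \<Rightarrow> int" where "mnv j = Min (range (\<lambda>i. j$i))"

lemma mxv_ge: "j$i \<le> mxv j" unfolding mxv_def by (rule Max_ge) auto
lemma mnv_le: "mnv j \<le> j$i" unfolding mnv_def by (rule Min_le) auto
lemma mxv_ex: "\<exists>i. j$i = mxv j"
proof -
  have "Max (range (\<lambda>i. j$i)) \<in> range (\<lambda>i. j$i)" by (rule Max_in) auto
  thus ?thesis unfolding mxv_def by (metis (no_types, lifting) imageE)
qed
lemma mnv_ex: "\<exists>i. j$i = mnv j"
proof -
  have "Min (range (\<lambda>i. j$i)) \<in> range (\<lambda>i. j$i)" by (rule Min_in) auto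
  thus ?thesis unfolding mnv_def by (metis (no_types, lifting) imageE)
qed

lemma mxv_eqI: "(\<And>i. j$i \<le> M) \<Longrightarrow> j$i0 = M \<Longrightarrow> mxv j = M"
  by (metis antisym mxv_ex mxv_ge)
lemma mnv_eqI: "(\<And>i. M \<le> j$i) \<Longrightarrow> j$i0 = M \<Longrightarrow> mnv j = M"
  by (metis antisym mnv_ex mnv_le)

lemma pairs_sym:
  fixes P :: "4 \<Rightarrow> 4 \<Rightarrow> bool"
  assumes "\<forall>i j. i < j \<longrightarrow> P i j" "\<And>i j. P i j \<Longrightarrow> P j i" "\<And>i. P i i"
  shows "P i j"
proof (cases i j rule: linorder_cases)
  case less thus ?thesis using assms(1) by blast
next
  case equal thus ?thesis using assms(3) by simp
next
  case greater thus ?thesis using assms(1,2) by blast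
qed

lemma Hstar_iff:
  "k \<in> Hstar m \<longleftrightarrow> k \<in> HH \<and> (\<forall>i l. \<bar>k$i - k$l\<bar> \<le> 4 * int m)"
proof
  assume a: "k \<in> Hstar m"
  have "\<bar>k$i - k$l\<bar> \<le> 4 * int m" for i l
  proof (rule pairs_sym[where P="\<lambda>i l. \<bar>k$i - k$l\<bar> \<le> 4 * int m"])
    show "\<forall>i j. i < j \<longrightarrow> \<bar>k$i - k$j\<bar> \<le> 4 * int m"
    proof (intro allI impI)
      fix i j :: 4 assume "i < j"
      hence "-(4*int m) \<le> k$i - k$j \<and> k$i - k$j \<le> 4*int m" using a by (auto simp: Hstar_def)
      thus "\<bar>k$i - k$j\<bar> \<le> 4 * int m" by (simp add: abs_le_iff)
    qed
  qed (simp_all add: abs_minus_commute)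
  thus "k \<in> HH \<and> (\<forall>i l. \<bar>k$i - k$l\<bar> \<le> 4 * int m)" using a by (auto simp: Hstar_def)
next
  assume b: "k \<in> HH \<and> (\<forall>i l. \<bar>k$i - k$l\<bar> \<le> 4 * int m)"
  have "- 4 * int m \<le> k$i - k$j \<and> k$i - k$j \<le> 4 * int m" for i j
  proof -
    have "\<bar>k$i - k$j\<bar> \<le> 4 * int m" using b by blast
    thus ?thesis by (auto simp: abs_le_iff)
  qed
  thus "k \<in> Hstar m" unfolding Hstar_def using b by blast
qed

lemma Hstar_iff2:
  "k \<in> Hstar m \<longleftrightarrow> k \<in> HH \<and> mxv k - mnv k \<le> 4 * int m"
proof -
  have "(\<forall>i l. \<bar>k$i - k$l\<bar> \<le> 4 * int m) \<longleftrightarrow> mxv k - mnv k \<le> 4 * int m"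
  proof
    assume "\<forall>i l. \<bar>k$i - k$l\<bar> \<le> 4 * int m"
    moreover obtain i l where "k$i = mxv k" "k$l = mnv k" using mxv_ex mnv_ex by metis
    ultimately have "\<bar>mxv k - mnv k\<bar> \<le> 4 * int m" by metis
    thus "mxv k - mnv k \<le> 4 * int m" by simp
  next
    assume a: "mxv k - mnv k \<le> 4 * int m"
    show "\<forall>i l. \<bar>k$i - k$l\<bar> \<le> 4 * int m"
    proof (intro allI)
      fix i l
      have "k$i \<le> mxv k" "k$l \<le> mxv k" "mnv k \<le> k$i" "mnv k \<le> k$l" by (auto simp: mxv_ge mnv_le)
      thus "\<bar>k$i - k$l\<bar> \<le> 4 * int m" using a by linarith
    qed
  qed
  thus ?thesis unfolding Hstar_iff by blast
qed

lemma HH_iff: "k \<in> HH \<longleftrightarrow> k$1 + k$2 + k$3 + k$4 = 0 \<and> (\<forall>i. k$i mod 4 = k$1 mod 4)"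
proof
  assume "k \<in> HH" thus "k$1 + k$2 + k$3 + k$4 = 0 \<and> (\<forall>i. k$i mod 4 = k$1 mod 4)"
    unfolding HH_def sum_4 by auto
next
  assume a: "k$1 + k$2 + k$3 + k$4 = 0 \<and> (\<forall>i. k$i mod 4 = k$1 mod 4)"
  have "k$i mod 4 = k$j mod 4" for i j
  proof -
    have "k$i mod 4 = k$1 mod 4" "k$j mod 4 = k$1 mod 4" using a by blast+
    thus ?thesis by simp
  qed
  thus "k \<in> HH" using a unfolding HH_def sum_4 by auto
qed

lemma finite_Hstar: "finite (Hstar m)"
proof -
  have "Hstar m \<subseteq> (\<lambda>f. \<chi> i. f i) ` PiE UNIV (\<lambda>_. {-4*int m..4*int m})"
  proof
    fix k assume k: "k \<in> Hstar m"
    hence s: "k$1 + k$2 + k$3 + k$4 = 0" and b: "\<And>i l. \<bar>k$i - k$l\<bar> \<le> 4 * int m"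
      by (auto simp: Hstar_iff HH_iff)
    have "k$i \<in> {-4*int m..4*int m}" for i
    proof -
      have "\<bar>k$i - k$1\<bar> \<le> 4 * int m" "\<bar>k$i - k$2\<bar> \<le> 4 * int m" "\<bar>k$i - k$3\<bar> \<le> 4 * int m" "\<bar>k$i - k$4\<bar> \<le> 4 * int m"
        using b by auto
      thus ?thesis using s by auto
    qed
    hence "(\<lambda>i. k$i) \<in> PiE UNIV (\<lambda>_. {-4*int m..4*int m})" by auto
    thus "k \<in> (\<lambda>f. \<chi> i. f i) ` PiE UNIV (\<lambda>_. {-4*int m..4*int m})"
      by (intro image_eqI[where x="\<lambda>i. k$i"]) auto
  qed
  moreover have "finite (PiE (UNIV::4 set) (\<lambda>_. {-4*int m..4*int m}))"
    by (intro finite_PiE) auto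
  ultimately show ?thesis using finite_subset by blast
qed


lemma card_pairs_choose:
  fixes X :: "'a set" and Y :: "'b set"
  assumes fX: "finite X" and fY: "finite Y"
  shows "card {(A,B). A \<subseteq> X \<and> B \<subseteq> Y \<and> card A = card B} = (card X + card Y) choose card X"
proof -
  let ?S = "\<lambda>a. {A. A \<subseteq> X \<and> card A = a} \<times> {B. B \<subseteq> Y \<and> card B = a}"
  have eq: "{(A,B). A \<subseteq> X \<and> B \<subseteq> Y \<and> card A = card B} = (\<Union>a\<in>{..card Y}. ?S a)"
  proof
    show "{(A,B). A \<subseteq> X \<and> B \<subseteq> Y \<and> card A = card B} \<subseteq> (\<Union>a\<in>{..card Y}. ?S a)"
    proof
      fix p assume "p \<in> {(A,B). A \<subseteq> X \<and> B \<subseteq> Y \<and> card A = card B}"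
      then obtain A B where p: "p = (A,B)" "A \<subseteq> X" "B \<subseteq> Y" "card A = card B" by blast
      have "card B \<le> card Y" using p(3) fY by (simp add: card_mono)
      thus "p \<in> (\<Union>a\<in>{..card Y}. ?S a)" using p by blast
    qed
  next
    show "(\<Union>a\<in>{..card Y}. ?S a) \<subseteq> {(A,B). A \<subseteq> X \<and> B \<subseteq> Y \<and> card A = card B}"
    proof
      fix p assume "p \<in> (\<Union>a\<in>{..card Y}. ?S a)"
      then obtain a A B where "p = (A,B)" "A \<subseteq> X" "card A = a" "B \<subseteq> Y" "card B = a" by blast
      thus "p \<in> {(A,B). A \<subseteq> X \<and> B \<subseteq> Y \<and> card A = card B}" by simp
    qed
  qed
  have fin: "finite (?S a)" for a
  proof -
    have "finite {A. A \<subseteq> X \<and> card A = a}" by (rule finite_subset[of _ "Pow X"]) (use fX in auto)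
    moreover have "finite {B. B \<subseteq> Y \<and> card B = a}" by (rule finite_subset[of _ "Pow Y"]) (use fY in auto)
    ultimately show ?thesis by blast
  qed
  have "card (\<Union>a\<in>{..card Y}. ?S a) = (\<Sum>a\<le>card Y. card (?S a))"
    proof (rule card_UN_disjoint)
    show "\<forall>i\<in>{..card Y}. finite (?S i)" using fin by blast
    show "\<forall>i\<in>{..card Y}. \<forall>j\<in>{..card Y}. i \<noteq> j \<longrightarrow> ?S i \<inter> ?S j = {}" by blast
  qed simp
  also have "\<dots> = (\<Sum>a\<le>card Y. (card X choose a) * (card Y choose (card Y - a)))"
  proof (rule sum.cong[OF refl])
    fix a assume a: "a \<in> {..card Y}"
    have "card (?S a) = (card X choose a) * (card Y choose a)"
      by (simp add: card_cartesian_product n_subsets fX fY)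
    also have "card Y choose a = card Y choose (card Y - a)"
      using a by (intro binomial_symmetric) simp
    finally show "card (?S a) = (card X choose a) * (card Y choose (card Y - a))" .
  qed
  also have "\<dots> = (card X + card Y) choose card Y" by (rule vandermonde)
  also have "\<dots> = (card X + card Y) choose card X"
    by (metis add_diff_cancel_right' binomial_symmetric le_add2)
  finally show ?thesis using eq by simp
qed


definition ind :: "4 set \<Rightarrow> 4 \<Rightarrow> int" where "ind A i = (if i \<in> A then 1 else 0)"
definition shiftv :: "nat \<Rightarrow> 4 set \<Rightarrow> 4 set \<Rightarrow> int^4 \<Rightarrow> int^4" where
  "shiftv n A B j = (\<chi> i. j$i + 4 * int n * (ind B i - ind A i))"
definition MaxS :: "int^4 \<Rightarrow> 4 set" where "MaxS j = {i. j$i = mxv j}"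
definition MinS :: "int^4 \<Rightarrow> 4 set" where "MinS j = {i. j$i = mnv j}"

lemma sum_ind: "(\<Sum>i\<in>UNIV. ind A i) = int (card A)"
  unfolding ind_def by (simp add: sum.If_cases)

lemma Hstar_facts:
  assumes "j \<in> Hstar n"
  shows "j$1 + j$2 + j$3 + j$4 = 0" "\<And>i. j$i mod 4 = j$1 mod 4" "\<And>i l. \<bar>j$i - j$l\<bar> \<le> 4 * int n"
  using assms by (auto simp: Hstar_iff HH_iff)

lemma class_char:
  assumes n: "n \<ge> 1" and j: "j \<in> Hstar n" and j': "j' \<in> Hstar n"
    and e: "\<forall>i. (4 * int n) dvd (j'$i - j$i)"
  shows "\<exists>A B. A \<subseteq> MaxS j \<and> B \<subseteq> MinS j \<and> card A = card B \<and>
           (A \<noteq> {} \<longrightarrow> mxv j - mnv j = 4 * int n) \<and> j' = shiftv n A B j"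
proof -
  define N where "N = 4 * int n"
  have N: "N > 0" using n by (simp add: N_def)
  define v where "v i = (j'$i - j$i) div N" for i
  have jv: "j'$i = j$i + N * v i" for i
  proof -
    have "N dvd (j'$i - j$i)" using e by (simp add: N_def)
    hence "N * v i = j'$i - j$i" unfolding v_def by simp
    thus ?thesis by simp
  qed
  note sj = Hstar_facts[OF j] and sj' = Hstar_facts[OF j']
  have "N * (v 1 + v 2 + v 3 + v 4) = 0"
    using sj(1) sj'(1) jv[of 1] jv[of 2] jv[of 3] jv[of 4] by (simp add: algebra_simps)
  hence vs: "v 1 + v 2 + v 3 + v 4 = 0" using N by simp
  have bd: "v i - v l \<le> 2" for i l
  proof (rule ccontr)
    assume "\<not> v i - v l \<le> 2"
    hence "v i - v l \<ge> 3" by simp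
    hence "N * (v i - v l) \<ge> N * 3" using N by (intro mult_left_mono) auto
    moreover have "N * (v i - v l) = (j'$i - j'$l) - (j$i - j$l)" using jv[of i] jv[of l] by (simp add: algebra_simps)
    moreover have "\<bar>j'$i - j'$l\<bar> \<le> N" "\<bar>j$i - j$l\<bar> \<le> N" using sj(3) sj'(3) by (auto simp: N_def)
    ultimately show False using N by linarith
  qed
  have vr: "v i = -1 \<or> v i = 0 \<or> v i = 1" for i
  proof -
    have all: "v x - v y \<le> 2" for x y using bd by blast
    have "v i \<le> 1 \<and> v i \<ge> -1"
      using exhaust_4[of i] vs all[of i 1] all[of i 2] all[of i 3] all[of i 4]
        all[of 1 i] all[of 2 i] all[of 3 i] all[of 4 i]
        all[of 1 2] all[of 1 3] all[of 1 4] all[of 2 1] all[of 2 3] all[of 2 4]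
        all[of 3 1] all[of 3 2] all[of 3 4] all[of 4 1] all[of 4 2] all[of 4 3]
      by auto
    thus ?thesis by auto
  qed
  have ex_neg: "\<exists>l. v l = -1" if "v i = 1" for i
  proof (rule ccontr)
    assume "\<nexists>l. v l = -1"
    hence "v l \<ge> 0" for l using vr[of l] by auto
    hence "v 1 \<ge> 0" "v 2 \<ge> 0" "v 3 \<ge> 0" "v 4 \<ge> 0" by auto
    thus False using that vs exhaust_4[of i] by auto
  qed
  have ex_pos: "\<exists>l. v l = 1" if "v i = -1" for i
  proof (rule ccontr)
    assume "\<nexists>l. v l = 1"
    hence "v l \<le> 0" for l using vr[of l] by auto
    hence "v 1 \<le> 0" "v 2 \<le> 0" "v 3 \<le> 0" "v 4 \<le> 0" by auto
    thus False using that vs exhaust_4[of i] by auto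
  qed
  have key: "j$i = mnv j \<and> j$l = mxv j \<and> mxv j - mnv j = N" if "v i = 1" "v l = -1" for i l
  proof -
    have "j'$i - j'$l = (j$i - j$l) + 2 * N" using jv[of i] jv[of l] that by (simp add: algebra_simps)
    moreover have "\<bar>j'$i - j'$l\<bar> \<le> N" "\<bar>j$i - j$l\<bar> \<le> N" using sj(3) sj'(3) by (auto simp: N_def)
    ultimately have d: "j$l = j$i + N" by linarith
    have "j$x \<ge> j$i" for x using sj(3)[of l x] d by (auto simp: N_def)
    hence m1: "mnv j = j$i" by (intro mnv_eqI) auto
    have "j$x \<le> j$l" for x using sj(3)[of x i] d by (auto simp: N_def)
    hence m2: "mxv j = j$l" by (intro mxv_eqI) auto
    show ?thesis using m1 m2 d by simp
  qed
  define A where "A = {i. v i = -1}"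
  define B where "B = {i. v i = 1}"
  have vAB: "v i = ind B i - ind A i" for i
    using vr[of i] by (auto simp: A_def B_def ind_def)
  have AM: "A \<subseteq> MaxS j"
  proof
    fix l assume "l \<in> A" hence l: "v l = -1" by (simp add: A_def)
    then obtain i where "v i = 1" using ex_pos by blast
    thus "l \<in> MaxS j" using key[OF _ l] by (simp add: MaxS_def)
  qed
  have BM: "B \<subseteq> MinS j"
  proof
    fix i assume "i \<in> B" hence i: "v i = 1" by (simp add: B_def)
    then obtain l where "v l = -1" using ex_neg by blast
    thus "i \<in> MinS j" using key[OF i] by (simp add: MinS_def)
  qed
  have rng: "A \<noteq> {} \<longrightarrow> mxv j - mnv j = 4 * int n"
  proof
    assume "A \<noteq> {}" then obtain l where l: "v l = -1" by (auto simp: A_def)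
    then obtain i where "v i = 1" using ex_pos by blast
    thus "mxv j - mnv j = 4 * int n" using key[OF _ l] by (simp add: N_def)
  qed
  have "(\<Sum>i\<in>UNIV. v i) = int (card B) - int (card A)"
    by (simp add: vAB sum_subtractf sum_ind)
  moreover have "(\<Sum>i\<in>UNIV. v i) = 0" using vs by (simp add: sum_4)
  ultimately have cAB: "card A = card B" by simp
  have "j' = shiftv n A B j"
    unfolding shiftv_def vec_eq_iff using jv vAB by (simp add: N_def)
  thus ?thesis using AM BM cAB rng by blast
qed


lemma cw_alt: "cw n j = (if mxv j - mnv j < 4 * int n then 1
   else 1 / real ((card (MaxS j) + card (MinS j)) choose card (MaxS j)))"
  unfolding cw_def Let_def mxv_def mnv_def MaxS_def MinS_def by simp

lemma shiftv_nth: "shiftv n A B j $ i = j$i + 4 * int n * (ind B i - ind A i)"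
  by (simp add: shiftv_def)

lemma shiftv_empty: "shiftv n {} {} j = j"
  by (simp add: shiftv_def ind_def vec_eq_iff)

lemma MaxS_MinS_disj: "mxv j - mnv j > 0 \<Longrightarrow> MaxS j \<inter> MinS j = {}"
  by (auto simp: MaxS_def MinS_def)

lemma shift_good:
  assumes n: "n \<ge> 1" and j: "j \<in> Hstar n" and AM: "A \<subseteq> MaxS j" and BM: "B \<subseteq> MinS j"
    and cAB: "card A = card B" and rg: "A \<noteq> {} \<longrightarrow> mxv j - mnv j = 4 * int n"
  shows "shiftv n A B j \<in> Hstar n \<and> cw n (shiftv n A B j) = cw n j \<and>
         (\<forall>i. (4 * int n) dvd (shiftv n A B j $ i - j$i))"
proof (cases "A = {}")
  case True
  hence "B = {}" using cAB by simp
  thus ?thesis using True j by (simp add: shiftv_empty)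
next
  case False
  define N where "N = 4 * int n"
  have N: "N > 0" using n by (simp add: N_def)
  have rgN: "mxv j - mnv j = N" using rg False by (simp add: N_def)
  have disj: "MaxS j \<inter> MinS j = {}" using rgN N MaxS_MinS_disj by simp
  have AB: "A \<inter> B = {}" using AM BM disj by blast
  have Bne: "B \<noteq> {}" using False cAB by auto
  define j' where "j' = shiftv n A B j"
  have j'v: "j'$i = (if i \<in> A then mnv j else if i \<in> B then mxv j else j$i)" for i
  proof -
    have "i \<in> A \<Longrightarrow> j$i = mxv j" "i \<in> B \<Longrightarrow> j$i = mnv j" using AM BM by (auto simp: MaxS_def MinS_def)
    thus ?thesis using AB rgN unfolding j'_def shiftv_nth ind_def N_def by auto
  qed
  have rng: "mnv j \<le> j'$i \<and> j'$i \<le> mxv j" for i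
    using j'v[of i] mnv_le[of j i] mxv_ge[of j i] rgN N by auto
  obtain b where b: "b \<in> B" using Bne by auto
  obtain a where a: "a \<in> A" using False by auto
  have mx': "mxv j' = mxv j"
    by (rule mxv_eqI[of _ _ b]) (use rng j'v[of b] b AB in auto)
  have mn': "mnv j' = mnv j"
    by (rule mnv_eqI[of _ _ a]) (use rng j'v[of a] a in auto)
  have MaxS': "MaxS j' = (MaxS j - A) \<union> B"
  proof -
    have "j'$i = mxv j \<longleftrightarrow> i \<in> (MaxS j - A) \<union> B" for i
      using j'v[of i] rgN N AM BM disj by (auto simp: MaxS_def MinS_def)
    thus ?thesis unfolding MaxS_def mx' by blast
  qed
  have MinS': "MinS j' = (MinS j - B) \<union> A"
  proof -
    have "j'$i = mnv j \<longleftrightarrow> i \<in> (MinS j - B) \<union> A" for i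
      using j'v[of i] rgN N AM BM disj by (auto simp: MaxS_def MinS_def)
    thus ?thesis unfolding MinS_def mn' by blast
  qed
  have cMax: "card (MaxS j') = card (MaxS j)"
  proof -
    have "card ((MaxS j - A) \<union> B) = card (MaxS j - A) + card B"
      by (rule card_Un_disjoint) (use BM disj in auto)
    also have "card (MaxS j - A) = card (MaxS j) - card A" using AM by (simp add: card_Diff_subset)
    also have "card A \<le> card (MaxS j)" using AM by (simp add: card_mono)
    ultimately show ?thesis using MaxS' cAB by simp
  qed
  have cMin: "card (MinS j') = card (MinS j)"
  proof -
    have "card ((MinS j - B) \<union> A) = card (MinS j - B) + card A"
      by (rule card_Un_disjoint) (use AM disj in auto)
    also have "card (MinS j - B) = card (MinS j) - card B" using BM by (simp add: card_Diff_subset)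
    also have "card B \<le> card (MinS j)" using BM by (simp add: card_mono)
    ultimately show ?thesis using MinS' cAB by simp
  qed
  have cweq: "cw n j' = cw n j"
    unfolding cw_alt mx' mn' cMax cMin by simp
  have dv: "\<forall>i. (4 * int n) dvd (j'$i - j$i)"
    unfolding j'_def shiftv_nth by simp
  have HHj: "j \<in> HH" using j by (simp add: Hstar_iff)
  have sum0: "j'$1 + j'$2 + j'$3 + j'$4 = 0"
  proof -
    have "(\<Sum>i\<in>UNIV. j'$i) = (\<Sum>i\<in>UNIV. j$i) + N * ((\<Sum>i\<in>UNIV. ind B i) - (\<Sum>i\<in>UNIV. ind A i))"
    proof -
      have "(\<Sum>i\<in>UNIV. j'$i) = (\<Sum>i\<in>UNIV. j$i + N * (ind B i - ind A i))"
        unfolding j'_def shiftv_nth N_def by simp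
      also have "\<dots> = (\<Sum>i\<in>UNIV. j$i) + N * (\<Sum>i\<in>UNIV. (ind B i - ind A i))"
        by (simp add: sum.distrib sum_distrib_left)
      finally show ?thesis by (simp add: sum_subtractf)
    qed
    also have "\<dots> = 0" using HHj cAB by (simp add: sum_ind HH_def)
    finally show ?thesis by (simp add: sum_4)
  qed
  have md: "j'$i mod 4 = j'$1 mod 4" for i
  proof -
    have "j'$i mod 4 = j$i mod 4" "j'$1 mod 4 = j$1 mod 4"
      unfolding j'_def shiftv_nth by (simp_all add: mod_add_right_eq[symmetric])
    moreover have "j$i mod 4 = j$1 mod 4" using Hstar_facts(2)[OF j] by blast
    ultimately show ?thesis by simp
  qed
  have "j' \<in> Hstar n" unfolding Hstar_iff2 HH_iff using sum0 md mx' mn' rgN by (simp add: N_def)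
  thus ?thesis using cweq dv unfolding j'_def by blast
qed

definition Eset :: "nat \<Rightarrow> int^4 \<Rightarrow> (int^4) set" where
  "Eset n j = {j' \<in> Hstar n. \<forall>i. (4 * int n) dvd (j'$i - j$i)}"
definition Vset :: "nat \<Rightarrow> int^4 \<Rightarrow> (4 set \<times> 4 set) set" where
  "Vset n j = {(A,B). A \<subseteq> MaxS j \<and> B \<subseteq> MinS j \<and> card A = card B \<and> (A \<noteq> {} \<longrightarrow> mxv j - mnv j = 4 * int n)}"

lemma Eset_eq:
  assumes n: "n \<ge> 1" and j: "j \<in> Hstar n"
  shows "Eset n j = (\<lambda>(A,B). shiftv n A B j) ` Vset n j"
proof
  show "Eset n j \<subseteq> (\<lambda>(A,B). shiftv n A B j) ` Vset n j"
  proof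
    fix j' assume "j' \<in> Eset n j"
    hence "j' \<in> Hstar n" "\<forall>i. (4 * int n) dvd (j'$i - j$i)" by (auto simp: Eset_def)
    from class_char[OF n j this] obtain A B where "A \<subseteq> MaxS j" "B \<subseteq> MinS j" "card A = card B"
      "A \<noteq> {} \<longrightarrow> mxv j - mnv j = 4 * int n" "j' = shiftv n A B j" by blast
    thus "j' \<in> (\<lambda>(A,B). shiftv n A B j) ` Vset n j" unfolding Vset_def by force
  qed
next
  show "(\<lambda>(A,B). shiftv n A B j) ` Vset n j \<subseteq> Eset n j"
    using shift_good[OF n j] by (auto simp: Vset_def Eset_def)
qed

lemma Vset_disj: "(A,B) \<in> Vset n j \<Longrightarrow> n \<ge> 1 \<Longrightarrow> A \<inter> B = {}"
  using MaxS_MinS_disj[of j] by (cases "A = {}") (auto simp: Vset_def)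

lemma inj_shift:
  assumes n: "n \<ge> 1"
  shows "inj_on (\<lambda>(A,B). shiftv n A B j) (Vset n j)"
proof (rule inj_onI, clarify)
  fix A B A' B' assume v: "(A,B) \<in> Vset n j" "(A',B') \<in> Vset n j"
    and eq: "shiftv n A B j = shiftv n A' B' j"
  have N: "4 * int n > 0" using n by simp
  have d: "ind B i - ind A i = ind B' i - ind A' i" for i
  proof -
    have "shiftv n A B j $ i = shiftv n A' B' j $ i" using eq by simp
    hence "4 * int n * (ind B i - ind A i) = 4 * int n * (ind B' i - ind A' i)" by (simp add: shiftv_nth)
    thus ?thesis using N by simp
  qed
  have d1: "A \<inter> B = {}" "A' \<inter> B' = {}" using Vset_disj[OF v(1) n] Vset_disj[OF v(2) n] by auto
  have "i \<in> A \<longleftrightarrow> i \<in> A'" for i using d[of i] d1 by (auto simp: ind_def split: if_splits)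
  moreover have "i \<in> B \<longleftrightarrow> i \<in> B'" for i using d[of i] d1 by (auto simp: ind_def split: if_splits)
  ultimately show "A = A' \<and> B = B'" by blast
qed

lemma sum_class:
  assumes n: "n \<ge> 1" and j: "j \<in> Hstar n"
  shows "(\<Sum>j'\<in>Eset n j. cw n j') = 1"
proof -
  have cweq: "cw n j' = cw n j" if "j' \<in> Eset n j" for j'
    using that shift_good[OF n j] unfolding Eset_eq[OF n j] Vset_def by auto
  have "(\<Sum>j'\<in>Eset n j. cw n j') = (\<Sum>j'\<in>Eset n j. cw n j)" using cweq by (rule sum.cong[OF refl])
  also have "\<dots> = real (card (Eset n j)) * cw n j" by simp
  also have "card (Eset n j) = card (Vset n j)"
    unfolding Eset_eq[OF n j] by (rule card_image[OF inj_shift[OF n]])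
  finally have S: "(\<Sum>j'\<in>Eset n j. cw n j') = real (card (Vset n j)) * cw n j" .
  have rg: "mxv j - mnv j \<le> 4 * int n" using j by (simp add: Hstar_iff2)
  show ?thesis
  proof (cases "mxv j - mnv j < 4 * int n")
    case True
    have "Vset n j = {({},{})}"
    proof
      show "Vset n j \<subseteq> {({},{})}"
      proof
        fix p assume "p \<in> Vset n j"
        then obtain A B where p: "p = (A,B)" "card A = card B" "A \<noteq> {} \<longrightarrow> mxv j - mnv j = 4 * int n"
          unfolding Vset_def by blast
        hence "A = {}" using True by auto
        hence "B = {}" using p(2) by simp
        thus "p \<in> {({},{})}" using p(1) \<open>A = {}\<close> by simp
      qed
    qed (simp add: Vset_def)
    thus ?thesis using S True by (simp add: cw_alt)
  next
    case False
    hence eqN: "mxv j - mnv j = 4 * int n" using rg by simp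
    have "Vset n j = {(A,B). A \<subseteq> MaxS j \<and> B \<subseteq> MinS j \<and> card A = card B}"
      unfolding Vset_def using eqN by auto
    hence "card (Vset n j) = (card (MaxS j) + card (MinS j)) choose card (MaxS j)"
      by (simp add: card_pairs_choose)
    moreover have "((card (MaxS j) + card (MinS j)) choose card (MaxS j)) > 0" by simp
    ultimately show ?thesis using S False by (simp add: cw_alt)
  qed
qed


definition eqvn :: "nat \<Rightarrow> int^4 \<Rightarrow> int^4 \<Rightarrow> bool" where
  "eqvn n j j' \<longleftrightarrow> (\<forall>i. (4 * int n) dvd (j'$i - j$i))"

lemma eqvn_sym: "eqvn n j j' \<Longrightarrow> eqvn n j' j"
  unfolding eqvn_def
proof (intro allI)
  fix i assume "\<forall>i. 4 * int n dvd j' $ i - j $ i"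
  hence "4 * int n dvd - (j' $ i - j $ i)" by (simp only: dvd_minus_iff)
  thus "4 * int n dvd j $ i - j' $ i" by simp
qed
lemma eqvn_trans: "eqvn n j j' \<Longrightarrow> eqvn n j' j'' \<Longrightarrow> eqvn n j j''"
  unfolding eqvn_def
proof (intro allI)
  fix i assume "\<forall>i. 4 * int n dvd j' $ i - j $ i" "\<forall>i. 4 * int n dvd j'' $ i - j' $ i"
  hence "4 * int n dvd (j' $ i - j $ i) + (j'' $ i - j' $ i)" by (intro dvd_add) auto
  thus "4 * int n dvd j'' $ i - j $ i" by simp
qed

lemma exists_lower_set:
  fixes f :: "'a \<Rightarrow> int"
  assumes "finite I" "k \<le> card I"
  shows "\<exists>S \<subseteq> I. card S = k \<and> (\<forall>i\<in>S. \<forall>l\<in>I - S. f i \<le> f l)"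
  using assms(2)
proof (induction k)
  case 0 thus ?case by (intro exI[of _ "{}"]) auto
next
  case (Suc k)
  then obtain S where S: "S \<subseteq> I" "card S = k" "\<forall>i\<in>S. \<forall>l\<in>I - S. f i \<le> f l" by auto
  have fS: "finite S" using S(1) assms(1) finite_subset by blast
  have "I - S \<noteq> {}"
  proof
    assume "I - S = {}" hence "I \<subseteq> S" by blast
    hence "card I \<le> card S" using fS by (simp add: card_mono)
    thus False using Suc.prems S(2) by simp
  qed
  hence ne: "f ` (I - S) \<noteq> {}" and fin: "finite (f ` (I - S))" using assms(1) by auto
  have "Min (f ` (I - S)) \<in> f ` (I - S)" using Min_in[OF fin ne] .
  then obtain l0 where l0: "l0 \<in> I - S" "f l0 = Min (f ` (I - S))" by auto
  have l0min: "f l0 \<le> f l" if "l \<in> I - S" for l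
    using l0(2) Min_le[OF fin] that by auto
  show ?case
  proof (intro exI[of _ "insert l0 S"] conjI)
    show "insert l0 S \<subseteq> I" using S(1) l0(1) by auto
    show "card (insert l0 S) = Suc k" using l0(1) fS S(2) by simp
    show "\<forall>i\<in>insert l0 S. \<forall>l\<in>I - insert l0 S. f i \<le> f l"
      using S(3) l0min by auto
  qed
qed

lemma exists_closed_rep:
  assumes n: "n \<ge> 1" and x: "x \<in> HH"
  shows "\<exists>j\<in>Hstar n. eqvn n x j"
proof -
  define N where "N = 4 * int n"
  have N: "N > 0" using n by (simp add: N_def)
  define m where "m = mnv x"
  define e where "e i = (x$i - m) mod N" for i
  define q where "q i = (x$i - m) div N" for i
  have xe: "x$i = m + e i + N * q i" for i
  proof -
    have "e i + N * q i = x$i - m" unfolding e_def q_def by (rule mod_mult_div_eq)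
    thus ?thesis by simp
  qed
  have e0: "0 \<le> e i" "e i < N" for i using N by (auto simp: e_def)
  have q0: "0 \<le> q i" for i
  proof -
    have "0 \<le> x$i - m" using mnv_le[of x i] by (simp add: m_def)
    thus ?thesis unfolding q_def using N by (simp add: pos_imp_zdiv_nonneg_iff)
  qed
  define \<sigma> where "\<sigma> = q 1 + q 2 + q 3 + q 4"
  have sig0: "\<sigma> \<ge> 0" using q0 by (simp add: \<sigma>_def)
  define t where "t = \<sigma> mod 4"
  define d where "d = \<sigma> div 4"
  have t: "0 \<le> t" "t < 4" "\<sigma> = 4 * d + t" by (auto simp: t_def d_def)
  have "nat t \<le> card (UNIV :: 4 set)" using t by simp
  from exists_lower_set[OF _ this, of e] obtain S :: "4 set" where
    S: "card S = nat t" "\<forall>i\<in>S. \<forall>l\<in>UNIV - S. e i \<le> e l" by auto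
  define j where "j = (\<chi> i. m + e i + N * d + N * ind S i)"
  have jv: "j$i = m + e i + N * d + N * ind S i" for i by (simp add: j_def)
  have xsum: "x$1 + x$2 + x$3 + x$4 = 0" using x by (simp add: HH_iff)
  have indsum: "ind S 1 + ind S 2 + ind S 3 + ind S 4 = t"
  proof -
    have "(\<Sum>i\<in>UNIV. ind S i) = t" using S(1) t by (simp add: sum_ind)
    thus ?thesis by (simp add: sum_4)
  qed
  have jsum: "j$1 + j$2 + j$3 + j$4 = 0"
  proof -
    have "j$1 + j$2 + j$3 + j$4 - (x$1 + x$2 + x$3 + x$4) = N * (4 * d + (ind S 1 + ind S 2 + ind S 3 + ind S 4) - \<sigma>)"
      unfolding jv xe \<sigma>_def by (simp add: algebra_simps)
    thus ?thesis using xsum indsum t by simp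
  qed
  have dvd4: "4 dvd N" by (simp add: N_def)
  have jmod: "j$i mod 4 = x$i mod 4" for i
  proof -
    have "j$i = x$i + 4 * (int n * (d + ind S i - q i))" unfolding jv xe N_def by (simp add: algebra_simps)
    thus ?thesis by simp
  qed
  have xm: "x$i mod 4 = x$1 mod 4" for i using x by (simp add: HH_iff)
  have HHj: "j \<in> HH" unfolding HH_iff using jsum jmod xm by simp
  have bnd: "\<bar>j$i - j$l\<bar> \<le> N" for i l
  proof -
    have d: "j$i - j$l = e i - e l + N * (ind S i - ind S l)" unfolding jv by (simp add: algebra_simps)
    show ?thesis
    proof (cases "i \<in> S")
      case True
      show ?thesis
      proof (cases "l \<in> S")
        case True thus ?thesis using \<open>i \<in> S\<close> d e0[of i] e0[of l] by (simp add: ind_def)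
      next
        case False
        hence "e i \<le> e l" using S(2) \<open>i \<in> S\<close> by auto
        thus ?thesis using \<open>i \<in> S\<close> False d e0[of i] e0[of l] by (simp add: ind_def)
      qed
    next
      case False
      show ?thesis
      proof (cases "l \<in> S")
        case True
        hence "e l \<le> e i" using S(2) \<open>i \<notin> S\<close> by auto
        thus ?thesis using \<open>i \<notin> S\<close> True d e0[of i] e0[of l] by (simp add: ind_def)
      next
        case False thus ?thesis using \<open>i \<notin> S\<close> d e0[of i] e0[of l] by (simp add: ind_def)
      qed
    qed
  qed
  have "j \<in> Hstar n" unfolding Hstar_iff using HHj bnd by (simp add: N_def)
  moreover have "eqvn n x j"
    unfolding eqvn_def
  proof
    fix i
    have "j$i - x$i = N * (d + ind S i - q i)" unfolding jv xe by (simp add: algebra_simps)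
    thus "4 * int n dvd j$i - x$i" by (simp add: N_def)
  qed
  ultimately show ?thesis by blast
qed


definition jp :: "int \<Rightarrow> int \<Rightarrow> int \<Rightarrow> int^4" where
  "jp a b c = vector [4*a - c, 4*b - c, 3*c - 4*a - 4*b, -c]"

lemma jp_nth [simp]: "jp a b c $ 1 = 4*a - c" "jp a b c $ 2 = 4*b - c"
  "jp a b c $ 3 = 3*c - 4*a - 4*b" "jp a b c $ 4 = -c"
  by (simp_all add: jp_def)

lemma jp_HH: "jp a b s \<in> HH"
proof -
  have "jp a b s $ i mod 4 = jp a b s $ 1 mod 4" for i
  proof -
    have e: "3 * s - 4*a - 4*b = - s + 4 * (s - a - b)" by (simp add: algebra_simps)
    have "(3 * s - 4*a - 4*b) mod 4 = (-s) mod 4" unfolding e by (rule mod_mult_self2)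
    moreover have "(4*a - s) mod 4 = (-s) mod 4"
    proof -
      have "(- s + 4 * a) mod 4 = (-s) mod 4" by (rule mod_mult_self2)
      thus ?thesis by (simp add: add.commute)
    qed
    moreover have "(4*b - s) mod 4 = (-s) mod 4"
    proof -
      have "(- s + 4 * b) mod 4 = (-s) mod 4" by (rule mod_mult_self2)
      thus ?thesis by (simp add: add.commute)
    qed
    ultimately show ?thesis using exhaust_4[of i] by (elim disjE) (simp_all only: jp_nth)
  qed
  thus ?thesis unfolding HH_iff by simp
qed

lemma HH_jp:
  assumes "j \<in> HH"
  shows "j = jp ((j$1 - j$4) div 4) ((j$2 - j$4) div 4) (- j$4)"
proof -
  have s: "j$1 + j$2 + j$3 + j$4 = 0" and md: "\<And>i. j$i mod 4 = j$1 mod 4" using assms by (auto simp: HH_iff)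
  have "4 dvd (j$4 - j$1)" using md[of 4] by (simp add: mod_eq_dvd_iff)
  hence "4 dvd (j$1 - j$4)" by (simp add: dvd_diff_commute)
  hence a: "4 * ((j$1 - j$4) div 4) = j$1 - j$4" by simp
  have "4 dvd (j$2 - j$1)" "4 dvd (j$4 - j$1)" using md[of 4] md[of 2] by (simp_all add: mod_eq_dvd_iff)
  hence "4 dvd ((j$2 - j$1) - (j$4 - j$1))" by (rule dvd_diff)
  hence "4 dvd (j$2 - j$4)" by simp
  hence b: "4 * ((j$2 - j$4) div 4) = j$2 - j$4" by simp
  show ?thesis unfolding vec_eq_iff
  proof
    fix i :: 4
    show "j$i = jp ((j$1 - j$4) div 4) ((j$2 - j$4) div 4) (- j$4) $ i"
      using exhaust_4[of i] a b s by auto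
  qed
qed

lemma jp_inj: "jp a b s = jp a' b' s' \<Longrightarrow> a = a' \<and> b = b' \<and> s = s'"
proof -
  assume e: "jp a b s = jp a' b' s'"
  have "jp a b s $ 4 = jp a' b' s' $ 4" "jp a b s $ 1 = jp a' b' s' $ 1" "jp a b s $ 2 = jp a' b' s' $ 2"
    using e by simp_all
  thus ?thesis by simp
qed

definition repj :: "nat \<Rightarrow> int^4 \<Rightarrow> int^4" where
  "repj n j = jp (((j$1 - j$4) div 4) mod int n) (((j$2 - j$4) div 4) mod int n) ((- j$4) mod (4 * int n))"

definition Tp :: "nat \<Rightarrow> (int \<times> int \<times> int) set" where
  "Tp n = {0..<int n} \<times> {0..<int n} \<times> {0..<4 * int n}"

lemma finite_Tp: "finite (Tp n)" by (simp add: Tp_def)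

lemma jp_diff_dvd:
  assumes "int n dvd (a' - a)" "int n dvd (b' - b)" "(4 * int n) dvd (s' - s)"
  shows "eqvn n (jp a b s) (jp a' b' s')"
  unfolding eqvn_def
proof
  fix i :: 4
  obtain u where u: "a' - a = int n * u" using assms(1) by (auto elim!: dvdE)
  obtain w where w: "b' - b = int n * w" using assms(2) by (auto elim!: dvdE)
  obtain z where z: "s' - s = 4 * int n * z" using assms(3) by (auto elim!: dvdE)
  have h1: "jp a' b' s' $ 1 - jp a b s $ 1 = 4 * int n * (u - z)" using u z by (simp add: algebra_simps)
  have h2: "jp a' b' s' $ 2 - jp a b s $ 2 = 4 * int n * (w - z)" using w z by (simp add: algebra_simps)
  have h3: "jp a' b' s' $ 3 - jp a b s $ 3 = 4 * int n * (3 * z - u - w)" using u w z by (simp add: algebra_simps)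
  have h4: "jp a' b' s' $ 4 - jp a b s $ 4 = 4 * int n * (- z)" using z by (simp add: algebra_simps)
  have "4 * int n dvd jp a' b' s' $ 1 - jp a b s $ 1" "4 * int n dvd jp a' b' s' $ 2 - jp a b s $ 2"
    "4 * int n dvd jp a' b' s' $ 3 - jp a b s $ 3" "4 * int n dvd jp a' b' s' $ 4 - jp a b s $ 4"
    unfolding h1 h2 h3 h4 by (rule dvd_triv_left)+
  thus "4 * int n dvd jp a' b' s' $ i - jp a b s $ i"
    using exhaust_4[of i] by auto
qed

lemma repj_eqv:
  assumes n: "n \<ge> 1" and j: "j \<in> HH"
  shows "eqvn n j (repj n j)"
proof -
  define a where "a = (j$1 - j$4) div 4"
  define b where "b = (j$2 - j$4) div 4"
  define s where "s = - j$4"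
  have jj: "j = jp a b s" using HH_jp[OF j] by (simp add: a_def b_def s_def)
  have "repj n j = jp (a mod int n) (b mod int n) (s mod (4 * int n))"
    by (simp add: repj_def a_def b_def s_def)
  moreover have "eqvn n (jp a b s) (jp (a mod int n) (b mod int n) (s mod (4 * int n)))"
    by (rule jp_diff_dvd) (simp_all add: mod_eq_dvd_iff[symmetric])
  ultimately show ?thesis using jj by simp
qed

lemma repj_cong:
  assumes n: "n \<ge> 1" and j: "j \<in> HH" and j': "j' \<in> HH" and e: "eqvn n j j'"
  shows "repj n j = repj n j'"
proof -
  have d: "(4 * int n) dvd (j'$i - j$i)" for i using e by (simp add: eqvn_def)
  have m: "j$i mod 4 = j$1 mod 4" "j'$i mod 4 = j'$1 mod 4" for i using j j' by (auto simp: HH_iff)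
  have a4: "4 dvd (j$i - j$4)" "4 dvd (j'$i - j'$4)" for i
  proof -
    have h: "4 dvd (j$i - j$1)" "4 dvd (j$4 - j$1)" "4 dvd (j'$i - j'$1)" "4 dvd (j'$4 - j'$1)"
      using m[of i] m[of 4] by (simp_all add: mod_eq_dvd_iff)
    have "4 dvd ((j$i - j$1) - (j$4 - j$1))" "4 dvd ((j'$i - j'$1) - (j'$4 - j'$1))"
      using dvd_diff[OF h(1) h(2)] dvd_diff[OF h(3) h(4)] by auto
    thus "4 dvd (j$i - j$4)" "4 dvd (j'$i - j'$4)" by simp_all
  qed
  have key: "int n dvd ((j'$i - j'$4) div 4 - (j$i - j$4) div 4)" for i
  proof -
    obtain u where u: "j$i - j$4 = 4 * u" using a4(1)[of i] by (auto elim!: dvdE)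
    obtain u' where u': "j'$i - j'$4 = 4 * u'" using a4(2)[of i] by (auto elim!: dvdE)
    have "(4 * int n) dvd ((j'$i - j$i) - (j'$4 - j$4))" using d[of i] d[of 4] by (rule dvd_diff)
    moreover have "(j'$i - j$i) - (j'$4 - j$4) = 4 * (u' - u)" using u u' by (simp add: algebra_simps)
    ultimately have "(4 * int n) dvd (4 * (u' - u))" by simp
    then obtain r where "4 * (u' - u) = 4 * int n * r" by (elim dvdE)
    hence "u' - u = int n * r" by simp
    hence "int n dvd (u' - u)" by simp
    thus ?thesis using u u' by simp
  qed
  have "(4 * int n) dvd - (j'$4 - j$4)" using d[of 4] by (simp only: dvd_minus_iff)
  hence k4: "(4 * int n) dvd ((- j'$4) - (- j$4))" by simp
  have e1: "((j'$1 - j'$4) div 4) mod int n = ((j$1 - j$4) div 4) mod int n"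
    using key[of 1] by (simp add: mod_eq_dvd_iff)
  have e2: "((j'$2 - j'$4) div 4) mod int n = ((j$2 - j$4) div 4) mod int n"
    using key[of 2] by (simp add: mod_eq_dvd_iff)
  have e3: "(- j'$4) mod (4 * int n) = (- j$4) mod (4 * int n)"
    using k4 by (simp add: mod_eq_dvd_iff)
  show ?thesis unfolding repj_def e1 e2 e3 ..
qed

lemma repj_jp:
  assumes "(a,b,s) \<in> Tp n"
  shows "repj n (jp a b s) = jp a b s"
  using assms by (simp add: repj_def Tp_def)

lemma repj_in:
  assumes n: "n \<ge> 1"
  shows "repj n j \<in> (\<lambda>(a,b,s). jp a b s) ` Tp n"
proof -
  have "(((j$1 - j$4) div 4) mod int n, ((j$2 - j$4) div 4) mod int n, (- j$4) mod (4 * int n)) \<in> Tp n"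
    using n by (simp add: Tp_def)
  thus ?thesis unfolding repj_def by force
qed

lemma weighted_sum:
  fixes F :: "int^4 \<Rightarrow> complex"
  assumes n: "n \<ge> 1"
    and per: "\<And>j j'. j \<in> HH \<Longrightarrow> j' \<in> HH \<Longrightarrow> eqvn n j j' \<Longrightarrow> F j = F j'"
  shows "(\<Sum>j\<in>Hstar n. of_real (cw n j) * F j) = (\<Sum>(a,b,s)\<in>Tp n. F (jp a b s))"
proof -
  let ?T = "(\<lambda>(a,b,s). jp a b s) ` Tp n"
  have finT: "finite ?T" using finite_Tp by simp
  have HHs: "j \<in> HH" if "j \<in> Hstar n" for j using that by (simp add: Hstar_iff)
  have "(\<Sum>j\<in>Hstar n. of_real (cw n j) * F j) =
        (\<Sum>x\<in>?T. \<Sum>j\<in>{j. j \<in> Hstar n \<and> repj n j = x}. of_real (cw n j) * F j)"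
    by (rule sum.group[symmetric]) (use finite_Hstar finT repj_in[OF n] in auto)
  also have "\<dots> = (\<Sum>x\<in>?T. F x)"
  proof (rule sum.cong[OF refl])
    fix x assume "x \<in> ?T"
    then obtain a b s where abs: "(a,b,s) \<in> Tp n" "x = jp a b s" by auto
    have xH: "x \<in> HH" using abs by (simp add: jp_HH)
    have rx: "repj n x = x" using abs repj_jp by simp
    obtain j0 where j0: "j0 \<in> Hstar n" "eqvn n x j0" using exists_closed_rep[OF n xH] by blast
    have set: "{j. j \<in> Hstar n \<and> repj n j = x} = Eset n j0"
    proof (intro set_eqI iffI)
      fix j assume "j \<in> {j. j \<in> Hstar n \<and> repj n j = x}"
      hence jj: "j \<in> Hstar n" "repj n j = x" by auto
      have ejx: "eqvn n j x" using repj_eqv[OF n HHs[OF jj(1)]] jj(2) by simp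
      have "eqvn n j0 j" using eqvn_sym[OF eqvn_trans[OF ejx j0(2)]] .
      thus "j \<in> Eset n j0" using jj(1) by (simp add: Eset_def eqvn_def)
    next
      fix j assume "j \<in> Eset n j0"
      hence jj: "j \<in> Hstar n" "eqvn n j0 j" by (auto simp: Eset_def eqvn_def)
      have "eqvn n x j" using j0(2) jj(2) by (rule eqvn_trans)
      hence "repj n x = repj n j" using repj_cong[OF n xH HHs[OF jj(1)]] by simp
      thus "j \<in> {j. j \<in> Hstar n \<and> repj n j = x}" using jj(1) rx by simp
    qed
    have "(\<Sum>j\<in>Eset n j0. of_real (cw n j) * F j) = (\<Sum>j\<in>Eset n j0. of_real (cw n j) * F x)"
    proof (rule sum.cong[OF refl])
      fix j assume "j \<in> Eset n j0"
      hence jj: "j \<in> Hstar n" "eqvn n j0 j" by (auto simp: Eset_def eqvn_def)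
      have "eqvn n x j" using j0(2) jj(2) by (rule eqvn_trans)
      hence "F x = F j" using per[OF xH HHs[OF jj(1)]] by simp
      thus "of_real (cw n j) * F j = of_real (cw n j) * F x" by simp
    qed
    also have "\<dots> = of_real (\<Sum>j\<in>Eset n j0. cw n j) * F x"
      by (simp add: sum_distrib_right)
    also have "\<dots> = F x" using sum_class[OF n j0(1)] by simp
    finally show "(\<Sum>j\<in>{j. j \<in> Hstar n \<and> repj n j = x}. of_real (cw n j) * F j) = F x"
      using set by simp
  qed
  also have "\<dots> = (\<Sum>(a,b,s)\<in>Tp n. F (jp a b s))"
  proof -
    have "inj_on (\<lambda>(a,b,s). jp a b s) (Tp n)"
    proof (rule inj_onI)
      fix p p' assume "p \<in> Tp n" "p' \<in> Tp n" "(\<lambda>(a,b,s). jp a b s) p = (\<lambda>(a,b,s). jp a b s) p'"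
      thus "p = p'" using jp_inj by (cases p, cases p') auto
    qed
    thus ?thesis by (simp add: sum.reindex case_prod_unfold)
  qed
  finally show ?thesis .
qed


lemma HH_dvd: "k \<in> HH \<Longrightarrow> 4 dvd (k$i - k$l)"
proof -
  assume "k \<in> HH"
  hence "k$i mod 4 = k$l mod 4" unfolding HH_def by blast
  thus ?thesis by (simp add: mod_eq_dvd_iff)
qed

definition ipk :: "int^4 \<Rightarrow> int^4 \<Rightarrow> int" where
  "ipk k j = k$1 * j$1 + k$2 * j$2 + k$3 * j$3 + k$4 * j$4"

definition EE :: "nat \<Rightarrow> int \<Rightarrow> complex" where
  "EE n z = exp (\<i> * of_real (pi * real_of_int z / (8 * real n)))"

lemma phi_scale: "phi k (scaleH n j) = EE n (ipk k j)"
proof -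
  have "hdot k (scaleH n j) = real_of_int (ipk k j) / (4 * real n)"
    unfolding hdot_def scaleH_def ipk_def sum_4 by (simp add: add_divide_distrib)
  hence "pi / 2 * hdot k (scaleH n j) = pi * real_of_int (ipk k j) / (8 * real n)" by simp
  thus ?thesis unfolding phi_def EE_def by simp
qed

lemma EE_add: "EE n (a + b) = EE n a * EE n b"
proof -
  have "\<i> * of_real (pi * real_of_int (a + b) / (8 * real n)) =
        \<i> * of_real (pi * real_of_int a / (8 * real n)) + \<i> * of_real (pi * real_of_int b / (8 * real n))"
    by (simp add: distrib_left add_divide_distrib)
  thus ?thesis unfolding EE_def by (simp add: exp_add)
qed

lemma EE_period:
  assumes n: "n \<ge> 1"
  shows "EE n (16 * int n * M) = 1"
proof -
  have "pi * real_of_int (16 * int n * M) / (8 * real n) = real_of_int M * (pi * 2)"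
    using n by (simp add: field_simps)
  hence "\<i> * of_real (pi * real_of_int (16 * int n * M) / (8 * real n)) = \<i> * (of_int M * (of_real pi * 2))"
    by (metis of_real_mult of_real_of_int_eq of_real_numeral)
  thus ?thesis unfolding EE_def by simp
qed

lemma phi_periodic:
  assumes n: "n \<ge> 1" and k: "k \<in> HH" and j: "j \<in> HH" and j': "j' \<in> HH" and e: "eqvn n j j'"
  shows "phi k (scaleH n j) = phi k (scaleH n j')"
proof -
  obtain w where w: "\<And>i. j'$i - j$i = 4 * int n * w i"
  proof -
    have "\<forall>i. \<exists>w. j'$i - j$i = 4 * int n * w" using e unfolding eqvn_def by (auto elim!: dvdE)
    thus ?thesis using that by metis
  qed
  have sj: "j$1 + j$2 + j$3 + j$4 = 0" and sj': "j'$1 + j'$2 + j'$3 + j'$4 = 0"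
    using j j' by (auto simp: HH_iff)
  have "4 * int n * (w 1 + w 2 + w 3 + w 4) = 0"
    using sj sj' w[of 1] w[of 2] w[of 3] w[of 4] by (simp add: algebra_simps)
  hence ws: "w 1 + w 2 + w 3 + w 4 = 0" using n by simp
  have km: "\<exists>m. k$i - k$4 = 4 * m" for i
  proof -
    have "4 dvd (k$i - k$4)" using HH_dvd[OF k] .
    thus ?thesis by (auto elim!: dvdE)
  qed
  obtain m1 m2 m3 where m: "k$1 - k$4 = 4 * m1" "k$2 - k$4 = 4 * m2" "k$3 - k$4 = 4 * m3"
    using km[of 1] km[of 2] km[of 3] by metis
  define M where "M = m1 * w 1 + m2 * w 2 + m3 * w 3"
  have "ipk k j' = ipk k j + 16 * int n * M"
  proof -
    have "ipk k j' - ipk k j = k$1 * (j'$1 - j$1) + k$2 * (j'$2 - j$2) + k$3 * (j'$3 - j$3) + k$4 * (j'$4 - j$4)"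
      unfolding ipk_def by (simp add: algebra_simps)
    also have "\<dots> = 4 * int n * (k$1 * w 1 + k$2 * w 2 + k$3 * w 3 + k$4 * w 4)"
      unfolding w by (simp add: algebra_simps)
    also have "k$1 * w 1 + k$2 * w 2 + k$3 * w 3 + k$4 * w 4 =
               (k$1 - k$4) * w 1 + (k$2 - k$4) * w 2 + (k$3 - k$4) * w 3 + k$4 * (w 1 + w 2 + w 3 + w 4)"
      by (simp add: algebra_simps)
    also have "\<dots> = 4 * M" unfolding m ws M_def by (simp add: algebra_simps)
    finally show ?thesis by (simp add: algebra_simps)
  qed
  thus ?thesis unfolding phi_scale using EE_add EE_period[OF n] by simp
qed


lemma EE_zero: "EE n 0 = 1" by (simp add: EE_def)

lemma EE_mult_nat: "EE n (int m * x) = EE n x ^ m"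
proof (induction m)
  case 0 thus ?case by (simp add: EE_zero)
next
  case (Suc m)
  have "int (Suc m) * x = x + int m * x" by (simp add: algebra_simps)
  thus ?case using Suc by (simp add: EE_add)
qed

lemma geo_sum:
  fixes z :: complex
  assumes "z ^ N = 1"
  shows "(\<Sum>a<N. z ^ a) = (if z = 1 then of_nat N else 0)"
  using assms by (simp add: sum_gp_strict)

lemma EE_one_iff:
  assumes n: "n \<ge> 1"
  shows "EE n (4 * x) = 1 \<longleftrightarrow> (4 * int n) dvd x"
proof
  assume "(4 * int n) dvd x"
  then obtain m where "x = 4 * int n * m" by (elim dvdE)
  hence h: "4 * x = 16 * int n * m" by simp
  show "EE n (4 * x) = 1" unfolding h by (rule EE_period[OF n])
next
  assume "EE n (4 * x) = 1"
  hence "exp (\<i> * of_real (pi * real_of_int (4 * x) / (8 * real n))) = 1" by (simp add: EE_def)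
  then obtain m :: int where m: "pi * real_of_int (4 * x) / (8 * real n) = of_int (2 * m) * pi"
    unfolding exp_eq_1 by auto
  hence "real_of_int (4 * x) = of_int (2 * m) * (8 * real n)"
    using n by (simp add: field_simps)
  hence "real_of_int x = real_of_int (4 * int n * m)" by simp
  hence "x = 4 * int n * m" by (simp only: of_int_eq_iff)
  thus "(4 * int n) dvd x" by simp
qed

lemma sum_Tp:
  fixes f g h :: "int \<Rightarrow> complex"
  shows "(\<Sum>(a,b,c)\<in>Tp n. f a * g b * h c) =
         (\<Sum>a<n. f (int a)) * (\<Sum>b<n. g (int b)) * (\<Sum>c<4*n. h (int c))"
proof -
  let ?m = "\<lambda>(a::nat,b::nat,c::nat). (int a, int b, int c)"
  have img: "Tp n = ?m ` ({..<n} \<times> {..<n} \<times> {..<4*n})"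
  proof
    show "Tp n \<subseteq> ?m ` ({..<n} \<times> {..<n} \<times> {..<4*n})"
    proof
      fix p assume "p \<in> Tp n"
      then obtain a b c where p: "p = (a,b,c)" "0 \<le> a" "a < int n" "0 \<le> b" "b < int n" "0 \<le> c" "c < 4 * int n"
        by (auto simp: Tp_def)
      have "(nat a, nat b, nat c) \<in> {..<n} \<times> {..<n} \<times> {..<4*n}" using p by auto
      moreover have "p = ?m (nat a, nat b, nat c)" using p by simp
      ultimately show "p \<in> ?m ` ({..<n} \<times> {..<n} \<times> {..<4*n})" by blast
    qed
  qed (auto simp: Tp_def)
  have inj: "inj_on ?m ({..<n} \<times> {..<n} \<times> {..<4*n})" by (rule inj_onI) auto
  have "(\<Sum>(a,b,c)\<in>Tp n. f a * g b * h c) = (\<Sum>(a,b,c)\<in>{..<n} \<times> {..<n} \<times> {..<4*n}. f (int a) * g (int b) * h (int c))"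
    unfolding img by (subst sum.reindex[OF inj]) (simp add: case_prod_unfold)
  also have "\<dots> = (\<Sum>a<n. \<Sum>(b,c)\<in>{..<n} \<times> {..<4*n}. f (int a) * g (int b) * h (int c))"
    by (simp add: sum.cartesian_product case_prod_unfold)
  also have "\<dots> = (\<Sum>a<n. f (int a) * ((\<Sum>b<n. g (int b)) * (\<Sum>c<4*n. h (int c))))"
  proof (rule sum.cong[OF refl])
    fix a
    have "(\<Sum>(b,c)\<in>{..<n} \<times> {..<4*n}. f (int a) * g (int b) * h (int c)) =
          (\<Sum>b<n. \<Sum>c<4*n. f (int a) * (g (int b) * h (int c)))"
      by (simp add: sum.cartesian_product case_prod_unfold mult.assoc)
    also have "\<dots> = (\<Sum>b<n. f (int a) * g (int b) * (\<Sum>c<4*n. h (int c)))"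
      by (simp add: sum_distrib_left mult.assoc)
    also have "\<dots> = (\<Sum>b<n. f (int a) * g (int b)) * (\<Sum>c<4*n. h (int c))"
      by (rule sum_distrib_right[symmetric])
    also have "(\<Sum>b<n. f (int a) * g (int b)) = f (int a) * (\<Sum>b<n. g (int b))"
      by (rule sum_distrib_left[symmetric])
    finally show "(\<Sum>(b,c)\<in>{..<n} \<times> {..<4*n}. f (int a) * g (int b) * h (int c)) =
          f (int a) * ((\<Sum>b<n. g (int b)) * (\<Sum>c<4*n. h (int c)))" by (simp only: mult.assoc)
  qed
  also have "\<dots> = (\<Sum>a<n. f (int a)) * (\<Sum>b<n. g (int b)) * (\<Sum>c<4*n. h (int c))"
    by (simp add: sum_distrib_right mult.assoc)
  finally show ?thesis .
qed

lemma ipk_jp: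
  assumes "k$1 + k$2 + k$3 + k$4 = 0"
  shows "ipk k (jp a b c) = int 1 * (a * (4 * (k$1 - k$3)) + b * (4 * (k$2 - k$3)) + c * (4 * k$3))"
proof -
  have "ipk k (jp a b c) - int 1 * (a * (4 * (k$1 - k$3)) + b * (4 * (k$2 - k$3)) + c * (4 * k$3))
      = - c * (k$1 + k$2 + k$3 + k$4)" unfolding ipk_def jp_nth by (simp add: algebra_simps)
  thus ?thesis using assms by simp
qed

lemma char_sum:
  assumes n: "n \<ge> 1" and k: "k \<in> HH"
  shows "(\<Sum>(a,b,c)\<in>Tp n. EE n (ipk k (jp a b c))) =
     (if (4 * int n) dvd (k$1 - k$3) \<and> (4 * int n) dvd (k$2 - k$3) \<and> (4 * int n) dvd (k$3)
      then 4 * of_nat n ^ 3 else 0)"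
proof -
  have ks: "k$1 + k$2 + k$3 + k$4 = 0" using k by (simp add: HH_iff)
  define z1 where "z1 = EE n (4 * (k$1 - k$3))"
  define z2 where "z2 = EE n (4 * (k$2 - k$3))"
  define z3 where "z3 = EE n (4 * k$3)"
  have trm: "EE n (ipk k (jp a b c)) = z1 ^ nat a * z2 ^ nat b * z3 ^ nat c"
    if "(a,b,c) \<in> Tp n" for a b c
  proof -
    have "a = int (nat a)" "b = int (nat b)" "c = int (nat c)" using that by (auto simp: Tp_def)
    hence "EE n (ipk k (jp a b c)) = EE n (int (nat a) * (4 * (k$1 - k$3)) + int (nat b) * (4 * (k$2 - k$3)) + int (nat c) * (4 * k$3))"
      using ipk_jp[OF ks, of a b c] by simp
    also have "\<dots> = z1 ^ nat a * z2 ^ nat b * z3 ^ nat c"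
      unfolding EE_add EE_mult_nat z1_def z2_def z3_def ..
    finally show ?thesis .
  qed
  have "(\<Sum>(a,b,c)\<in>Tp n. EE n (ipk k (jp a b c))) = (\<Sum>(a,b,c)\<in>Tp n. z1 ^ nat a * z2 ^ nat b * z3 ^ nat c)"
    by (rule sum.cong[OF refl]) (use trm in auto)
  also have "\<dots> = (\<Sum>a<n. z1 ^ a) * (\<Sum>b<n. z2 ^ b) * (\<Sum>c<4*n. z3 ^ c)"
    using sum_Tp[of "\<lambda>a. z1 ^ nat a" "\<lambda>b. z2 ^ nat b" "\<lambda>c. z3 ^ nat c" n] by simp
  also have "\<dots> = (if z1 = 1 then of_nat n else 0) * (if z2 = 1 then of_nat n else 0) * (if z3 = 1 then of_nat (4 * n) else 0)"
  proof -
    have d1: "4 dvd (k$1 - k$3)" "4 dvd (k$2 - k$3)" using HH_dvd[OF k] by auto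
    obtain u where u: "k$1 - k$3 = 4 * u" using d1(1) by (elim dvdE)
    obtain w where w: "k$2 - k$3 = 4 * w" using d1(2) by (elim dvdE)
    have "z1 ^ n = EE n (int n * (4 * (k$1 - k$3)))" unfolding z1_def EE_mult_nat ..
    also have "int n * (4 * (k$1 - k$3)) = 16 * int n * u" using u by simp
    finally have "z1 ^ n = 1" using EE_period[OF n, of u] by simp
    have "z2 ^ n = EE n (int n * (4 * (k$2 - k$3)))" unfolding z2_def EE_mult_nat ..
    also have "int n * (4 * (k$2 - k$3)) = 16 * int n * w" using w by simp
    finally have "z2 ^ n = 1" using EE_period[OF n, of w] by simp
    have "z3 ^ (4 * n) = EE n (int (4 * n) * (4 * k$3))" unfolding z3_def EE_mult_nat ..
    also have "int (4 * n) * (4 * k$3) = 16 * int n * k$3" by simp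
    finally have "z3 ^ (4 * n) = 1" using EE_period[OF n, of "k$3"] by simp
    show ?thesis using \<open>z1 ^ n = 1\<close> \<open>z2 ^ n = 1\<close> \<open>z3 ^ (4 * n) = 1\<close> by (simp add: geo_sum)
  qed
  also have "\<dots> = (if (4 * int n) dvd (k$1 - k$3) \<and> (4 * int n) dvd (k$2 - k$3) \<and> (4 * int n) dvd (k$3)
      then 4 * of_nat n ^ 3 else 0)"
    unfolding z1_def z2_def z3_def EE_one_iff[OF n] by (simp add: power3_eq_cube)
  finally show ?thesis .
qed

lemma only_zero:
  assumes n: "n \<ge> 1" and k: "k \<in> Hstar (2 * n - 1)"
    and d: "(4 * int n) dvd (k$1 - k$3)" "(4 * int n) dvd (k$2 - k$3)" "(4 * int n) dvd (k$3)"
  shows "k = 0"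
proof -
  have ks: "k$1 + k$2 + k$3 + k$4 = 0" using k by (simp add: Hstar_iff HH_iff)
  have bd: "\<bar>k$i - k$l\<bar> \<le> 4 * int (2 * n - 1)" for i l using k by (simp add: Hstar_iff)
  have N: "4 * int (2 * n - 1) = 8 * int n - 4" using n by (simp add: of_nat_diff)
  obtain t3 where t3: "k$3 = 4 * int n * t3" using d(3) by (elim dvdE)
  obtain u where u: "k$1 - k$3 = 4 * int n * u" using d(1) by (elim dvdE)
  obtain w where w: "k$2 - k$3 = 4 * int n * w" using d(2) by (elim dvdE)
  define t1 where "t1 = u + t3"
  define t2 where "t2 = w + t3"
  define t4 where "t4 = - t1 - t2 - t3"
  have kt: "k$1 = 4 * int n * t1" "k$2 = 4 * int n * t2" "k$3 = 4 * int n * t3" "k$4 = 4 * int n * t4"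
    using u w t3 ks by (simp_all add: t1_def t2_def t4_def algebra_simps)
  have small: "\<bar>x - y\<bar> \<le> 1" if "\<bar>4 * int n * x - 4 * int n * y\<bar> \<le> 8 * int n - 4" for x y :: int
  proof (rule ccontr)
    assume "\<not> \<bar>x - y\<bar> \<le> 1"
    hence "\<bar>x - y\<bar> \<ge> 2" by simp
    hence "4 * int n * \<bar>x - y\<bar> \<ge> 4 * int n * 2" by (intro mult_left_mono) auto
    moreover have "\<bar>4 * int n * x - 4 * int n * y\<bar> = 4 * int n * \<bar>x - y\<bar>"
      by (simp add: abs_mult right_diff_distrib[symmetric])
    ultimately show False using that by simp
  qed
  have "\<bar>t1 - t2\<bar> \<le> 1" "\<bar>t1 - t3\<bar> \<le> 1" "\<bar>t1 - t4\<bar> \<le> 1" "\<bar>t2 - t3\<bar> \<le> 1" "\<bar>t2 - t4\<bar> \<le> 1" "\<bar>t3 - t4\<bar> \<le> 1"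
    using small bd[of 1 2] bd[of 1 3] bd[of 1 4] bd[of 2 3] bd[of 2 4] bd[of 3 4] N kt by auto
  moreover have "t1 + t2 + t3 + t4 = 0" by (simp add: t4_def)
  ultimately have "t1 = 0 \<and> t2 = 0 \<and> t3 = 0 \<and> t4 = 0" by arith
  thus ?thesis using kt unfolding vec_eq_iff by (metis exhaust_4 mult_zero_right zero_index)
qed

lemma discrete_main:
  assumes n: "n \<ge> 1" and k: "k \<in> Hstar (2 * n - 1)"
  shows "(\<Sum>j\<in>Hstar n. of_real (cw n j) * phi k (scaleH n j)) = (if k = 0 then 4 * of_nat n ^ 3 else 0)"
proof -
  have kH: "k \<in> HH" using k by (simp add: Hstar_iff)
  have "(\<Sum>j\<in>Hstar n. of_real (cw n j) * phi k (scaleH n j)) = (\<Sum>(a,b,c)\<in>Tp n. phi k (scaleH n (jp a b c)))"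
    by (rule weighted_sum[OF n]) (rule phi_periodic[OF n kH])
  also have "\<dots> = (\<Sum>(a,b,c)\<in>Tp n. EE n (ipk k (jp a b c)))" by (simp add: phi_scale)
  also have "\<dots> = (if (4 * int n) dvd (k$1 - k$3) \<and> (4 * int n) dvd (k$2 - k$3) \<and> (4 * int n) dvd (k$3)
      then 4 * of_nat n ^ 3 else 0)" by (rule char_sum[OF n kH])
  also have "\<dots> = (if k = 0 then 4 * of_nat n ^ 3 else 0)"
    using only_zero[OF n k] by auto
  finally show ?thesis .
qed


definition Eint :: "real \<Rightarrow> complex" where
  "Eint a = (if a = 0 then 1 else (exp (\<i> * of_real a) - 1) / (\<i> * of_real a))"

lemma Eint_has_integral:
  "((\<lambda>t. exp (\<i> * of_real (a * t))) has_integral Eint a) {0..1}"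
proof (cases "a = 0")
  case True
  thus ?thesis using has_integral_const_real[of "1::complex" 0 1] by (simp add: Eint_def)
next
  case False
  define F where "F z = exp (\<i> * of_real a * z) / (\<i> * of_real a)" for z :: complex
  have d: "(F has_field_derivative exp (\<i> * of_real a * z)) (at z)" for z
  proof -
    have "(F has_field_derivative exp (\<i> * of_real a * z) * (\<i> * of_real a) / (\<i> * of_real a)) (at z)"
      unfolding F_def by (auto intro!: derivative_eq_intros)
    thus ?thesis using False by simp
  qed
  have "((\<lambda>t. exp (\<i> * of_real a * of_real t)) has_integral (F (of_real 1) - F (of_real 0))) {0..1}"
  proof (rule fundamental_theorem_of_calculus)
    fix x :: real assume "x \<in> {0..1}"
    show "((\<lambda>t. F (of_real t)) has_vector_derivative exp (\<i> * of_real a * of_real x)) (at x within {0..1})"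
      by (rule has_vector_derivative_real_field) (rule d)
  qed simp
  moreover have "F (of_real 1) - F (of_real 0) = Eint a" using False
    by (simp add: F_def Eint_def diff_divide_distrib)
  ultimately show ?thesis by (simp add: mult.assoc)
qed

definition gtw :: "real \<times> real \<times> real \<Rightarrow> real^3" where
  "gtw p = vector [fst p, fst (snd p), snd (snd p)]"
definition htw :: "real^3 \<Rightarrow> real \<times> real \<times> real" where
  "htw v = (v$1, v$2, v$3)"

lemma gtw_nth [simp]: "gtw p $ 1 = fst p" "gtw p $ 2 = fst (snd p)" "gtw p $ 3 = snd (snd p)"
  by (simp_all add: gtw_def)

lemma htw_gtw: "htw (gtw p) = p" by (simp add: htw_def)
lemma gtw_htw: "gtw (htw v) = v"
  unfolding vec_eq_iff htw_def by (simp add: forall_3)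


lemma mem_cbox3: "x \<in> cbox (a::real^3) b \<longleftrightarrow>
   a$1 \<le> x$1 \<and> x$1 \<le> b$1 \<and> a$2 \<le> x$2 \<and> x$2 \<le> b$2 \<and> a$3 \<le> x$3 \<and> x$3 \<le> b$3"
  by (simp add: mem_box_cart forall_3)

lemma mem_cboxP: "p \<in> cbox (u::real \<times> real \<times> real) v \<longleftrightarrow>
   fst u \<le> fst p \<and> fst p \<le> fst v \<and> fst (snd u) \<le> fst (snd p) \<and> fst (snd p) \<le> fst (snd v) \<and>
   snd (snd u) \<le> snd (snd p) \<and> snd (snd p) \<le> snd (snd v)"
proof -
  obtain u1 u2 u3 where u: "u = (u1,u2,u3)" by (cases u) auto
  obtain v1 v2 v3 where v: "v = (v1,v2,v3)" by (cases v) auto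
  obtain p1 p2 p3 where p: "p = (p1,p2,p3)" by (cases p) auto
  show ?thesis unfolding u v p by (simp add: cbox_Pair_eq)
qed

lemma gtw_img: "gtw ` cbox u v = cbox (gtw u) (gtw v)"
proof (rule set_eqI)
  fix x :: "real^3"
  have "x \<in> gtw ` cbox u v \<longleftrightarrow> htw x \<in> cbox u v"
    by (metis gtw_htw htw_gtw image_iff)
  also have "\<dots> \<longleftrightarrow> x \<in> cbox (gtw u) (gtw v)"
    unfolding mem_cboxP mem_cbox3 by (simp add: htw_def)
  finally show "x \<in> gtw ` cbox u v \<longleftrightarrow> x \<in> cbox (gtw u) (gtw v)" .
qed

lemma htw_img: "htw ` cbox u v = cbox (htw u) (htw v)"
proof (rule set_eqI)
  fix p :: "real \<times> real \<times> real"
  have "p \<in> htw ` cbox u v \<longleftrightarrow> gtw p \<in> cbox u v"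
    by (metis gtw_htw htw_gtw image_iff)
  also have "\<dots> \<longleftrightarrow> p \<in> cbox (htw u) (htw v)"
    unfolding mem_cboxP mem_cbox3 by (simp add: htw_def)
  finally show "p \<in> htw ` cbox u v \<longleftrightarrow> p \<in> cbox (htw u) (htw v)" .
qed

lemma prod_3': "prod f (UNIV::3 set) = f 1 * f 2 * f 3"
  unfolding UNIV_3 by (simp add: ac_simps)

lemma content_gtw: "Henstock_Kurzweil_Integration.content (gtw ` cbox u v) = Henstock_Kurzweil_Integration.content (cbox u v)"
proof -
  obtain u1 u2 u3 where u: "u = (u1,u2,u3)" by (cases u) auto
  obtain v1 v2 v3 where v: "v = (v1,v2,v3)" by (cases v) auto
  have "Henstock_Kurzweil_Integration.content (cbox (gtw u) (gtw v)) = (if u1 \<le> v1 \<and> u2 \<le> v2 \<and> u3 \<le> v3 then (v1 - u1) * (v2 - u2) * (v3 - u3) else 0)"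
  proof (cases "u1 \<le> v1 \<and> u2 \<le> v2 \<and> u3 \<le> v3")
    case True
    hence "cbox (gtw u) (gtw v) \<noteq> {}" unfolding interval_eq_empty_cart using u v by (auto simp: forall_3 not_less)
    thus ?thesis using True unfolding content_cbox_if_cart by (simp add: u v prod_3' mult.assoc)
  next
    case False
    hence "v1 < u1 \<or> v2 < u2 \<or> v3 < u3" by auto
    hence "\<exists>i. gtw v $ i < gtw u $ i"
      using u v by (elim disjE) (rule exI[of _ 1], simp, rule exI[of _ 2], simp, rule exI[of _ 3], simp)
    hence "cbox (gtw u) (gtw v) = {}" unfolding interval_eq_empty_cart .
    thus ?thesis using False by (subst if_not_P) simp_all
  qed
  moreover have "Henstock_Kurzweil_Integration.content (cbox u v) = (if u1 \<le> v1 \<and> u2 \<le> v2 \<and> u3 \<le> v3 then (v1 - u1) * (v2 - u2) * (v3 - u3) else 0)"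
    unfolding u v content_Pair by (simp add: mult.assoc)
  ultimately show ?thesis by (simp add: gtw_img)
qed

lemma linear_gtw: "linear gtw"
  by (rule linearI) (simp_all add: vec_eq_iff forall_3)

lemma cont_gtw: "continuous (at x) gtw"
  using linear_gtw by (simp add: linear_continuous_at linear_linear)

lemma cube_has_integral:
  fixes a1 a2 a3 :: real
  shows "((\<lambda>u::real^3. exp (\<i> * of_real (a1 * u$1 + a2 * u$2 + a3 * u$3))) has_integral
          (Eint a1 * Eint a2 * Eint a3)) (cbox 0 1)"
proof -
  define F where "F u = exp (\<i> * of_real (a1 * u$1 + a2 * u$2 + a3 * u$3))" for u :: "real^3"
  have contF: "continuous_on S F" for S
    unfolding F_def by (intro continuous_intros)
  have Fint: "(F has_integral integral (cbox 0 1) F) (cbox 0 1)"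
    using integrable_continuous[OF contF] by (simp add: has_integral_integral)
  hence "((\<lambda>x. F (gtw x)) has_integral (1 / 1) *\<^sub>R integral (cbox 0 1) F) (htw ` cbox 0 1)"
  proof (rule has_integral_twiddle[where r=1, rotated -1])
    show "\<exists>w z. gtw ` cbox u v = cbox w z" for u v using gtw_img by blast
    show "\<exists>w z. htw ` cbox u v = cbox w z" for u v using htw_img by blast
    show "Henstock_Kurzweil_Integration.content (gtw ` cbox u v) = 1 * Henstock_Kurzweil_Integration.content (cbox u v)" for u v
      using content_gtw by simp
    show "htw (gtw x) = x" for x by (rule htw_gtw)
    show "gtw (htw x) = x" for x by (rule gtw_htw)
    show "continuous (at x) gtw" for x by (rule cont_gtw)
  qed simp
  moreover have "htw ` cbox 0 1 = cbox (0,0,0) (1,1,1)" unfolding htw_img by (simp add: htw_def)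
  ultimately have A: "((\<lambda>x. F (gtw x)) has_integral integral (cbox 0 1) F) (cbox (0,0,0) (1,1,1))" by simp
  define G where "G x y z = exp (\<i> * of_real (a1 * x)) * (exp (\<i> * of_real (a2 * y)) * exp (\<i> * of_real (a3 * z)))" for x y z :: real
  have e: "F (gtw p) = G (fst p) (fst (snd p)) (snd (snd p))" for p
    unfolding F_def G_def by (simp add: exp_add[symmetric] distrib_left add.assoc)
  have contG: "continuous_on S (\<lambda>p. G (fst p) (fst (snd p)) (snd (snd p)))" for S
    unfolding G_def by (intro continuous_intros)
  have contG2: "continuous_on S (\<lambda>p. G x (fst p) (snd p))" for S x
    unfolding G_def by (intro continuous_intros)
  have i1: "integral {0..1} (\<lambda>t. exp (\<i> * of_real (a * t))) = Eint a" for a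
    using Eint_has_integral by (rule integral_unique)
  have "integral (cbox (0,0,0) (1,1,1)) (\<lambda>p. G (fst p) (fst (snd p)) (snd (snd p))) =
        integral (cbox 0 1) (\<lambda>x. integral (cbox (0,0) (1,1)) (\<lambda>y. G x (fst y) (snd y)))"
    using integral_prod_continuous[OF contG] by simp
  also have "\<dots> = integral (cbox 0 1) (\<lambda>x. integral (cbox 0 1) (\<lambda>y. integral (cbox 0 1) (\<lambda>z. G x y z)))"
  proof -
    have "integral (cbox (0,0) (1,1)) (\<lambda>y. G x (fst y) (snd y)) =
          integral (cbox 0 1) (\<lambda>y. integral (cbox 0 1) (\<lambda>z. G x y z))" for x
      using integral_prod_continuous[OF contG2] by simp
    thus ?thesis by simp
  qed
  also have "\<dots> = Eint a1 * Eint a2 * Eint a3"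
    unfolding G_def box_real integral_mult_left integral_mult_right i1 by (simp add: mult.assoc)
  finally have "integral (cbox 0 1) F = Eint a1 * Eint a2 * Eint a3"
    using integral_unique[OF A] e by simp
  hence "(F has_integral Eint a1 * Eint a2 * Eint a3) (cbox 0 1)" using Fint by simp
  thus ?thesis unfolding F_def .
qed


definition cv :: "complex \<Rightarrow> real^2" where "cv z = vector [Re z, Im z]"
definition civ :: "real^2 \<Rightarrow> complex" where "civ v = Complex (v$1) (v$2)"

lemma civ_cv [simp]: "civ (cv z) = z" by (simp add: cv_def civ_def)

lemma bl_cv: "bounded_linear cv"
proof -
  have "linear cv" by (rule linearI) (simp_all add: cv_def vec_eq_iff forall_2)
  thus ?thesis by (simp add: linear_linear)
qed

lemma bl_civ: "bounded_linear civ"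
proof -
  have "linear civ" by (rule linearI) (simp_all add: civ_def complex_eq_iff)
  thus ?thesis by (simp add: linear_linear)
qed

lemma cov_linear_complex:
  fixes L :: "real^3 \<Rightarrow> real^3" and g :: "real^3 \<Rightarrow> complex"
  assumes L: "linear L" and g: "continuous_on UNIV g"
    and I: "((\<lambda>x. g (L x)) has_integral I) (cbox 0 1)"
  shows "(g has_integral (of_real \<bar>det (matrix L)\<bar> * I)) (L ` cbox 0 1)"
proof -
  have contL: "continuous_on UNIV L" using L by (simp add: linear_continuous_on linear_linear)
  have cg: "continuous_on UNIV (cv \<circ> g)"
    by (rule continuous_on_compose[OF g]) (simp add: linear_continuous_on bl_cv)
  have cgL: "continuous_on (cbox 0 1) (cv \<circ> g \<circ> L)"
  proof -
    have "continuous_on (range L) (cv \<circ> g)" by (rule continuous_on_subset[OF cg]) simp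
    hence "continuous_on UNIV (cv \<circ> g \<circ> L)" using continuous_on_compose[OF contL] by (simp add: comp_assoc)
    thus ?thesis by (rule continuous_on_subset) simp
  qed
  have ai: "(cv \<circ> g \<circ> L) absolutely_integrable_on cbox 0 1"
    by (rule absolutely_integrable_continuous[OF cgL])
  have ai2: "(cv \<circ> g) absolutely_integrable_on (L ` cbox 0 1)"
    unfolding absolutely_integrable_on_linear_image[OF L] using ai by (simp add: comp_assoc)
  have ie: "integral (L ` cbox 0 1) (cv \<circ> g) = \<bar>det (matrix L)\<bar> *\<^sub>R integral (cbox 0 1) (cv \<circ> g \<circ> L)"
    using integral_change_of_variables_linear[OF L, where f="cv \<circ> g" and S="cbox 0 1"] ai by (simp add: comp_assoc)
  have "integral (cbox 0 1) (cv \<circ> g \<circ> L) = cv I"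
  proof -
    have "((cv \<circ> (\<lambda>x. g (L x))) has_integral cv I) (cbox 0 1)" by (rule has_integral_linear[OF I bl_cv])
    thus ?thesis by (simp add: o_def integral_unique)
  qed
  hence ie2: "integral (L ` cbox 0 1) (cv \<circ> g) = \<bar>det (matrix L)\<bar> *\<^sub>R cv I" using ie by simp
  have "((cv \<circ> g) has_integral integral (L ` cbox 0 1) (cv \<circ> g)) (L ` cbox 0 1)"
    using ai2 unfolding absolutely_integrable_on_def by (simp add: has_integral_integral)
  hence "((civ \<circ> (cv \<circ> g)) has_integral civ (\<bar>det (matrix L)\<bar> *\<^sub>R cv I)) (L ` cbox 0 1)"
    unfolding ie2 by (rule has_integral_linear[OF _ bl_civ])
  moreover have "civ \<circ> (cv \<circ> g) = g" by (simp add: o_def)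
  moreover have "civ (\<bar>det (matrix L)\<bar> *\<^sub>R cv I) = of_real \<bar>det (matrix L)\<bar> * I"
    by (simp add: civ_def cv_def complex_eq_iff)
  ultimately show ?thesis by simp
qed


definition emb :: "4 \<Rightarrow> real^3 \<Rightarrow> real^4" where
  "emb m u = (if m = 1 then vector [0, u$1, u$2, u$3] else if m = 2 then vector [u$1, 0, u$2, u$3]
     else if m = 3 then vector [u$1, u$2, 0, u$3] else vector [u$1, u$2, u$3, 0])"
definition cen :: "real^4 \<Rightarrow> real^4" where
  "cen t = (\<chi> i. t$i - (t$1 + t$2 + t$3 + t$4) / 4)"
definition dropH :: "real^4 \<Rightarrow> real^3" where
  "dropH t = vector [t$1, t$2, t$3]"
definition Lm :: "4 \<Rightarrow> real^3 \<Rightarrow> real^3" where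
  "Lm m u = dropH (cen (emb m u))"

lemma m4_cases: "(m::4) = 1 \<or> m = 2 \<or> m = 3 \<or> m = 4" by (rule exhaust_4)

lemma emb1: "emb 1 u = vector [0, u$1, u$2, u$3]" by (simp add: emb_def)
lemma emb2: "emb 2 u = vector [u$1, 0, u$2, u$3]" by (simp add: emb_def)
lemma emb3: "emb 3 u = vector [u$1, u$2, 0, u$3]" by (simp add: emb_def)
lemma emb4: "emb 4 u = vector [u$1, u$2, u$3, 0]" by (simp add: emb_def)

lemma linear_Lm: "linear (Lm m)"
proof (rule linearI)
  fix x y :: "real^3" and c :: real
  show "Lm m (x + y) = Lm m x + Lm m y"
    using m4_cases[of m]
    by (elim disjE) (simp_all add: Lm_def emb1 emb2 emb3 emb4 dropH_def cen_def vec_eq_iff forall_3 algebra_simps add_divide_distrib)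
  show "Lm m (c *\<^sub>R x) = c *\<^sub>R Lm m x"
    using m4_cases[of m]
    by (elim disjE) (simp_all add: Lm_def emb1 emb2 emb3 emb4 dropH_def cen_def vec_eq_iff forall_3 algebra_simps)
qed

lemma det_Lm: "\<bar>det (matrix (Lm m))\<bar> = 1/4"
  using m4_cases[of m]
  by (elim disjE) (simp_all add: det_3 matrix_def Lm_def emb1 emb2 emb3 emb4 dropH_def cen_def axis_def)


lemma liftH_nth [simp]: "liftH x $ 1 = x$1" "liftH x $ 2 = x$2" "liftH x $ 3 = x$3"
  "liftH x $ 4 = -(x$1 + x$2 + x$3)"
  by (simp_all add: liftH_def)

lemma hdot4: "hdot k t = of_int (k$1) * t$1 + of_int (k$2) * t$2 + of_int (k$3) * t$3 + of_int (k$4) * t$4"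
  unfolding hdot_def sum_4 by simp

lemma phi_liftH: "phi k (liftH x) = exp (\<i> * of_real (pi / 2 * (of_int (k$1) * x$1 + of_int (k$2) * x$2 + of_int (k$3) * x$3 - of_int (k$4) * (x$1 + x$2 + x$3))))"
proof -
  have "hdot k (liftH x) = of_int (k$1) * x$1 + of_int (k$2) * x$2 + of_int (k$3) * x$3 - of_int (k$4) * (x$1 + x$2 + x$3)"
    by (simp add: hdot4 algebra_simps)
  thus ?thesis unfolding phi_def by simp
qed

lemma cont_phi_liftH: "continuous_on S (\<lambda>x. phi k (liftH x))"
  unfolding phi_liftH by (intro continuous_intros)

lemma liftH_dropH: "t$1 + t$2 + t$3 + t$4 = 0 \<Longrightarrow> liftH (dropH t) = t"
  unfolding vec_eq_iff forall_4 by (simp add: dropH_def)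

lemma cen_nth: "cen t $ i = t$i - (t$1 + t$2 + t$3 + t$4) / 4" by (simp add: cen_def)

lemma cen_sum: "cen t $ 1 + cen t $ 2 + cen t $ 3 + cen t $ 4 = 0"
  unfolding cen_nth by (simp add: field_simps)

lemma liftH_Lm: "liftH (Lm m u) = cen (emb m u)"
  unfolding Lm_def by (rule liftH_dropH[OF cen_sum])

lemma hdot_cen:
  assumes "k$1 + k$2 + k$3 + k$4 = 0"
  shows "hdot k (cen t) = hdot k t"
proof -
  have "hdot k (cen t) = hdot k t - (t$1 + t$2 + t$3 + t$4) / 4 * of_int (k$1 + k$2 + k$3 + k$4)"
    unfolding hdot4 cen_nth by (simp add: field_simps)
  thus ?thesis using assms by simp
qed

definition kk :: "4 \<Rightarrow> int^4 \<Rightarrow> real^3" where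
  "kk m k = (if m = 1 then vector [pi/2 * k$2, pi/2 * k$3, pi/2 * k$4]
    else if m = 2 then vector [pi/2 * k$1, pi/2 * k$3, pi/2 * k$4]
    else if m = 3 then vector [pi/2 * k$1, pi/2 * k$2, pi/2 * k$4]
    else vector [pi/2 * k$1, pi/2 * k$2, pi/2 * k$3])"

lemma hdot_emb: "pi / 2 * hdot k (emb m u) = kk m k $ 1 * u$1 + kk m k $ 2 * u$2 + kk m k $ 3 * u$3"
  using m4_cases[of m]
  by (elim disjE) (simp_all add: hdot4 emb1 emb2 emb3 emb4 kk_def algebra_simps)

lemma piece_int:
  assumes k: "k \<in> HH"
  shows "((\<lambda>x. phi k (liftH x)) has_integral
           (of_real (1/4) * (Eint (kk m k $ 1) * Eint (kk m k $ 2) * Eint (kk m k $ 3)))) (Lm m ` cbox 0 1)"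
proof -
  have ks: "k$1 + k$2 + k$3 + k$4 = 0" using k by (simp add: HH_iff)
  have e: "phi k (liftH (Lm m u)) = exp (\<i> * of_real (kk m k $ 1 * u$1 + kk m k $ 2 * u$2 + kk m k $ 3 * u$3))" for u
    unfolding liftH_Lm phi_def hdot_cen[OF ks] hdot_emb[symmetric] ..
  have "((\<lambda>u. phi k (liftH (Lm m u))) has_integral (Eint (kk m k $ 1) * Eint (kk m k $ 2) * Eint (kk m k $ 3))) (cbox 0 1)"
    unfolding e by (rule cube_has_integral)
  from cov_linear_complex[OF linear_Lm cont_phi_liftH this]
  show ?thesis unfolding det_Lm .
qed


definition proj :: "4 \<Rightarrow> real^4 \<Rightarrow> real^3" where
  "proj m w = (if m = 1 then vector [w$2, w$3, w$4] else if m = 2 then vector [w$1, w$3, w$4]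
     else if m = 3 then vector [w$1, w$2, w$4] else vector [w$1, w$2, w$3])"

lemma emb_m: "emb m u $ m = 0"
  using m4_cases[of m] by (elim disjE) (simp_all add: emb1 emb2 emb3 emb4)

lemma emb_bnd:
  assumes "u \<in> cbox 0 1"
  shows "0 \<le> emb m u $ i \<and> emb m u $ i \<le> 1"
proof -
  have u: "0 \<le> u$1" "u$1 \<le> 1" "0 \<le> u$2" "u$2 \<le> 1" "0 \<le> u$3" "u$3 \<le> 1"
    using assms by (auto simp: mem_box_cart)
  show ?thesis using m4_cases[of m] m4_cases[of i] u
    by (elim disjE) (simp_all add: emb1 emb2 emb3 emb4)
qed

lemma emb_proj: "w $ m = 0 \<Longrightarrow> emb m (proj m w) = w"
  using m4_cases[of m]
  by (elim disjE) (simp_all add: emb1 emb2 emb3 emb4 proj_def vec_eq_iff forall_4)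

lemma proj_cube:
  assumes "\<And>i. 0 \<le> w$i \<and> w$i \<le> 1"
  shows "proj m w \<in> cbox 0 1"
  using m4_cases[of m] assms
  by (elim disjE) (simp_all add: proj_def mem_box_cart forall_3)

lemma cen_shift: "cen (\<chi> i. t$i - c) = cen t"
  unfolding cen_def vec_eq_iff by (simp add: field_simps)

lemma cen_id: "t$1 + t$2 + t$3 + t$4 = 0 \<Longrightarrow> cen t = t"
  unfolding cen_def vec_eq_iff by simp

lemma dropH_liftH: "dropH (liftH x) = x"
  unfolding dropH_def vec_eq_iff forall_3 by simp

lemma liftH_sum: "liftH x $ 1 + liftH x $ 2 + liftH x $ 3 + liftH x $ 4 = 0" by simp

lemma piece_char:
  "x \<in> Lm m ` cbox 0 1 \<longleftrightarrow> (\<forall>i. liftH x $ m \<le> liftH x $ i \<and> liftH x $ i \<le> liftH x $ m + 1)"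
proof
  assume "x \<in> Lm m ` cbox 0 1"
  then obtain u where u: "u \<in> cbox 0 1" "x = Lm m u" by auto
  have t: "liftH x = cen (emb m u)" using u(2) liftH_Lm by simp
  have d: "cen w $ i - cen w $ m = w$i - w$m" for w i by (simp add: cen_nth)
  show "\<forall>i. liftH x $ m \<le> liftH x $ i \<and> liftH x $ i \<le> liftH x $ m + 1"
  proof
    fix i
    have "liftH x $ i - liftH x $ m = emb m u $ i" unfolding t d emb_m by simp
    thus "liftH x $ m \<le> liftH x $ i \<and> liftH x $ i \<le> liftH x $ m + 1" using emb_bnd[OF u(1), of m i] by simp
  qed
next
  assume a: "\<forall>i. liftH x $ m \<le> liftH x $ i \<and> liftH x $ i \<le> liftH x $ m + 1"
  define t where "t = liftH x"
  define w where "w = (\<chi> i. t$i - t$m)"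
  have w0: "w$m = 0" by (simp add: w_def)
  have wb: "0 \<le> w$i \<and> w$i \<le> 1" for i using a[rule_format, of i] by (simp add: w_def t_def)
  have "Lm m (proj m w) = dropH (cen w)" unfolding Lm_def emb_proj[OF w0] ..
  also have "cen w = cen t" unfolding w_def by (rule cen_shift)
  also have "cen t = t" unfolding t_def by (rule cen_id[OF liftH_sum])
  also have "dropH t = x" unfolding t_def by (rule dropH_liftH)
  finally show "x \<in> Lm m ` cbox 0 1" using proj_cube[OF wb] by (metis image_eqI)
qed

definition PC :: "(real^3) set" where
  "PC = {x. \<forall>i j. \<bar>liftH x $ i - liftH x $ j\<bar> \<le> 1}"

lemma min4: "\<exists>m. \<forall>i. (t::real^4) $ m \<le> t $ i"
proof -
  have "Min (range (\<lambda>i. t$i)) \<in> range (\<lambda>i. t$i)" by (rule Min_in) auto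
  then obtain m where m: "t$m = Min (range (\<lambda>i. t$i))" by (metis (no_types, lifting) imageE)
  have "t$m \<le> t$i" for i unfolding m by (rule Min_le) auto
  thus ?thesis by blast
qed

lemma PC_eq: "PC = (\<Union>m. Lm m ` cbox 0 1)"
proof
  show "PC \<subseteq> (\<Union>m. Lm m ` cbox 0 1)"
  proof
    fix x assume x: "x \<in> PC"
    obtain m where m: "\<forall>i. liftH x $ m \<le> liftH x $ i" using min4 by blast
    have "\<forall>i. liftH x $ m \<le> liftH x $ i \<and> liftH x $ i \<le> liftH x $ m + 1"
    proof
      fix i
      have "\<bar>liftH x $ i - liftH x $ m\<bar> \<le> 1" using x by (simp add: PC_def)
      thus "liftH x $ m \<le> liftH x $ i \<and> liftH x $ i \<le> liftH x $ m + 1" using m by auto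
    qed
    hence "x \<in> Lm m ` cbox 0 1" by (rule iffD2[OF piece_char])
    thus "x \<in> (\<Union>m. Lm m ` cbox 0 1)" by (rule UN_I[OF UNIV_I])
  qed
next
  show "(\<Union>m. Lm m ` cbox 0 1) \<subseteq> PC"
  proof
    fix x assume "x \<in> (\<Union>m. Lm m ` cbox 0 1)"
    then obtain m where "x \<in> Lm m ` cbox 0 1" by blast
    hence a: "\<forall>i. liftH x $ m \<le> liftH x $ i \<and> liftH x $ i \<le> liftH x $ m + 1" by (rule iffD1[OF piece_char])
    have "\<bar>liftH x $ i - liftH x $ j\<bar> \<le> 1" for i j
      using a[rule_format, of i] a[rule_format, of j] by auto
    thus "x \<in> PC" by (simp add: PC_def)
  qed
qed

definition lvec :: "4 \<Rightarrow> real^3" where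
  "lvec i = (if i = 1 then vector [1,0,0] else if i = 2 then vector [0,1,0]
     else if i = 3 then vector [0,0,1] else vector [-1,-1,-1])"

lemma liftH_inner: "liftH x $ i = lvec i \<bullet> x"
  using m4_cases[of i] by (elim disjE) (simp_all add: lvec_def inner_vec_def sum_3)

lemma lvec_neq: "i \<noteq> j \<Longrightarrow> lvec i - lvec j \<noteq> 0"
  using m4_cases[of i] m4_cases[of j]
  by (elim disjE) (simp_all add: lvec_def vec_eq_iff forall_3)

lemma negl_hyp: "i \<noteq> j \<Longrightarrow> negligible {x. liftH x $ i - liftH x $ j = d}"
proof -
  assume "i \<noteq> j"
  have "{x. liftH x $ i - liftH x $ j = d} = {x. (lvec i - lvec j) \<bullet> x = d}"
    by (simp add: liftH_inner inner_diff_left)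
  moreover have "negligible {x. (lvec i - lvec j) \<bullet> x = d}"
    by (rule negligible_hyperplane) (use lvec_neq[OF \<open>i \<noteq> j\<close>] in simp)
  ultimately show ?thesis by simp
qed

lemma negl_pieces:
  assumes "m \<noteq> m'"
  shows "negligible (Lm m ` cbox 0 1 \<inter> Lm m' ` cbox 0 1)"
proof (rule negligible_subset[OF negl_hyp[OF assms, of 0]])
  show "Lm m ` cbox 0 1 \<inter> Lm m' ` cbox 0 1 \<subseteq> {x. liftH x $ m - liftH x $ m' = 0}"
  proof
    fix x assume x: "x \<in> Lm m ` cbox 0 1 \<inter> Lm m' ` cbox 0 1"
    have "\<forall>i. liftH x $ m \<le> liftH x $ i \<and> liftH x $ i \<le> liftH x $ m + 1"
      using x piece_char[of x m] by simp
    moreover have "\<forall>i. liftH x $ m' \<le> liftH x $ i \<and> liftH x $ i \<le> liftH x $ m' + 1"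
      using x piece_char[of x m'] by simp
    ultimately have "\<forall>i. liftH x $ m \<le> liftH x $ i" "\<forall>i. liftH x $ m' \<le> liftH x $ i" by auto
    hence "liftH x $ m \<le> liftH x $ m'" "liftH x $ m' \<le> liftH x $ m" by blast+
    thus "x \<in> {x. liftH x $ m - liftH x $ m' = 0}" by simp
  qed
qed

lemma P_sub: "{x. liftH x \<in> OmegaH} \<subseteq> PC"
proof
  fix x assume "x \<in> {x. liftH x \<in> OmegaH}"
  hence a: "\<forall>i j. i < j \<longrightarrow> -1 < liftH x $ i - liftH x $ j \<and> liftH x $ i - liftH x $ j \<le> 1"
    by (simp add: OmegaH_def)
  have "\<bar>liftH x $ i - liftH x $ j\<bar> \<le> 1" for i j
  proof (cases i j rule: linorder_cases)
    case less
    have "-1 < liftH x $ i - liftH x $ j \<and> liftH x $ i - liftH x $ j \<le> 1" using a less by blast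
    thus ?thesis by (simp add: abs_le_iff)
  next
    case equal thus ?thesis by simp
  next
    case greater
    have "-1 < liftH x $ j - liftH x $ i \<and> liftH x $ j - liftH x $ i \<le> 1" using a greater by blast
    thus ?thesis by (simp add: abs_le_iff)
  qed
  thus "x \<in> PC" by (simp add: PC_def)
qed

lemma PC_minus_P: "PC - {x. liftH x \<in> OmegaH} \<subseteq> (\<Union>p\<in>{p::4\<times>4. fst p \<noteq> snd p}. {x. liftH x $ fst p - liftH x $ snd p = -1})"
proof
  fix x assume x: "x \<in> PC - {x. liftH x \<in> OmegaH}"
  have s: "(\<Sum>i\<in>UNIV. liftH x $ i) = 0" by (simp add: sum_4)
  have "\<not> (\<forall>i j. i < j \<longrightarrow> -1 < liftH x $ i - liftH x $ j \<and> liftH x $ i - liftH x $ j \<le> 1)"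
    using x s by (simp add: OmegaH_def)
  then obtain i j where ij: "i < j" "\<not> (-1 < liftH x $ i - liftH x $ j \<and> liftH x $ i - liftH x $ j \<le> 1)" by blast
  have "\<bar>liftH x $ i - liftH x $ j\<bar> \<le> 1" using x by (simp add: PC_def)
  hence "liftH x $ i - liftH x $ j = -1" using ij(2) by auto
  hence "x \<in> {x. liftH x $ fst (i,j) - liftH x $ snd (i,j) = -1}" by simp
  moreover have "(i,j) \<in> {p::4\<times>4. fst p \<noteq> snd p}" using ij(1) by simp
  ultimately show "x \<in> (\<Union>p\<in>{p::4\<times>4. fst p \<noteq> snd p}. {x. liftH x $ fst p - liftH x $ snd p = -1})"
    by (rule UN_I[rotated])
qed

lemma negl_PC_P: "negligible (PC - {x. liftH x \<in> OmegaH})"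
proof (rule negligible_subset[OF _ PC_minus_P])
  show "negligible (\<Union>p\<in>{p::4\<times>4. fst p \<noteq> snd p}. {x. liftH x $ fst p - liftH x $ snd p = -1})"
  proof (rule negligible_Union)
    show "finite ((\<lambda>p. {x. liftH x $ fst p - liftH x $ snd p = -1}) ` {p::4\<times>4. fst p \<noteq> snd p})" by simp
    fix T assume "T \<in> (\<lambda>p. {x. liftH x $ fst p - liftH x $ snd p = -1}) ` {p::4\<times>4. fst p \<noteq> snd p}"
    then obtain p :: "4\<times>4" where p: "fst p \<noteq> snd p" "T = {x. liftH x $ fst p - liftH x $ snd p = -1}" by blast
    show "negligible T" unfolding p(2) by (rule negl_hyp[OF p(1)])
  qed
qed


abbreviation "eK k i \<equiv> Eint (pi / 2 * of_int (k$i))"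

lemma kk_simps:
  "kk 1 k $ 1 = pi/2 * k$2" "kk 1 k $ 2 = pi/2 * k$3" "kk 1 k $ 3 = pi/2 * k$4"
  "kk 2 k $ 1 = pi/2 * k$1" "kk 2 k $ 2 = pi/2 * k$3" "kk 2 k $ 3 = pi/2 * k$4"
  "kk 3 k $ 1 = pi/2 * k$1" "kk 3 k $ 2 = pi/2 * k$2" "kk 3 k $ 3 = pi/2 * k$4"
  "kk 4 k $ 1 = pi/2 * k$1" "kk 4 k $ 2 = pi/2 * k$2" "kk 4 k $ 3 = pi/2 * k$3"
  by (simp_all add: kk_def)

lemma cont_has_integral:
  assumes k: "k \<in> HH"
  shows "((\<lambda>x. phi k (liftH x)) has_integral
     (of_real (1/4) * (eK k 2 * eK k 3 * eK k 4 + eK k 1 * eK k 3 * eK k 4 + eK k 1 * eK k 2 * eK k 4 + eK k 1 * eK k 2 * eK k 3)))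
     {x. liftH x \<in> OmegaH}"
proof -
  let ?g = "\<lambda>x. phi k (liftH x)"
  let ?Q = "\<lambda>m::4. Lm m ` cbox 0 1"
  have h1: "(?g has_integral (of_real (1/4) * (eK k 2 * eK k 3 * eK k 4))) (?Q 1)"
    using piece_int[OF k, of 1] by (simp add: kk_simps)
  have h2: "(?g has_integral (of_real (1/4) * (eK k 1 * eK k 3 * eK k 4))) (?Q 2)"
    using piece_int[OF k, of 2] by (simp add: kk_simps)
  have h3: "(?g has_integral (of_real (1/4) * (eK k 1 * eK k 2 * eK k 4))) (?Q 3)"
    using piece_int[OF k, of 3] by (simp add: kk_simps)
  have h4: "(?g has_integral (of_real (1/4) * (eK k 1 * eK k 2 * eK k 3))) (?Q 4)"
    using piece_int[OF k, of 4] by (simp add: kk_simps)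
  have n: "negligible (?Q a \<inter> ?Q b)" if "a \<noteq> b" for a b using negl_pieces[OF that] .
  have neq: "(1::4) \<noteq> 2" "(1::4) \<noteq> 3" "(1::4) \<noteq> 4" "(2::4) \<noteq> 3" "(2::4) \<noteq> 4" "(3::4) \<noteq> 4" by simp_all
  have u12: "(?g has_integral (of_real (1/4) * (eK k 2 * eK k 3 * eK k 4) + of_real (1/4) * (eK k 1 * eK k 3 * eK k 4))) (?Q 1 \<union> ?Q 2)"
    by (rule has_integral_Un[OF h1 h2 n[OF neq(1)]])
  have "negligible ((?Q 1 \<union> ?Q 2) \<inter> ?Q 3)"
    using n[OF neq(2)] n[OF neq(4)] by (simp add: Int_Un_distrib2)
  hence u123: "(?g has_integral (of_real (1/4) * (eK k 2 * eK k 3 * eK k 4) + of_real (1/4) * (eK k 1 * eK k 3 * eK k 4)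
      + of_real (1/4) * (eK k 1 * eK k 2 * eK k 4))) (?Q 1 \<union> ?Q 2 \<union> ?Q 3)"
    by (rule has_integral_Un[OF u12 h3])
  have "negligible ((?Q 1 \<union> ?Q 2 \<union> ?Q 3) \<inter> ?Q 4)"
    using n[OF neq(3)] n[OF neq(5)] n[OF neq(6)] by (simp add: Int_Un_distrib2)
  hence u: "(?g has_integral (of_real (1/4) * (eK k 2 * eK k 3 * eK k 4) + of_real (1/4) * (eK k 1 * eK k 3 * eK k 4)
      + of_real (1/4) * (eK k 1 * eK k 2 * eK k 4) + of_real (1/4) * (eK k 1 * eK k 2 * eK k 3))) (?Q 1 \<union> ?Q 2 \<union> ?Q 3 \<union> ?Q 4)"
    by (rule has_integral_Un[OF u123 h4])
  have "?Q 1 \<union> ?Q 2 \<union> ?Q 3 \<union> ?Q 4 = PC" unfolding PC_eq UNIV_4 by auto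
  hence uPC: "(?g has_integral (of_real (1/4) * (eK k 2 * eK k 3 * eK k 4 + eK k 1 * eK k 3 * eK k 4 + eK k 1 * eK k 2 * eK k 4 + eK k 1 * eK k 2 * eK k 3))) PC"
    using u by (simp add: distrib_left)
  show ?thesis
  proof (rule iffD1[OF has_integral_spike_set_eq uPC])
    show "negligible {x \<in> PC - {x. liftH x \<in> OmegaH}. ?g x \<noteq> 0}"
      by (rule negligible_subset[OF negl_PC_P]) blast
    show "negligible {x \<in> {x. liftH x \<in> OmegaH} - PC. ?g x \<noteq> 0}"
    proof -
      have e: "{x \<in> {x. liftH x \<in> OmegaH} - PC. ?g x \<noteq> 0} = {}" using P_sub by blast
      show ?thesis unfolding e by (rule negligible_empty)
    qed
  qed
qed

lemma exp_pi2_shift: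
  assumes "k' = k0 + 4 * q"
  shows "exp (\<i> * of_real (pi / 2 * of_int k')) = exp (\<i> * of_real (pi / 2 * of_int k0))"
proof -
  have h: "\<i> * of_real (pi / 2 * of_int k') = \<i> * of_real (pi / 2 * of_int k0) + \<i> * (of_int q * (of_real pi * 2))"
    using assms by (simp add: algebra_simps)
  have "exp (\<i> * of_real (pi / 2 * of_int k')) = exp (\<i> * of_real (pi / 2 * of_int k0) + \<i> * (of_int q * (of_real pi * 2)))"
    by (rule arg_cong[where f=exp]) (rule h)
  also have "\<dots> = exp (\<i> * of_real (pi / 2 * of_int k0)) * exp (\<i> * (of_int q * (of_real pi * 2)))"
    by (rule exp_add)
  also have "exp (\<i> * (of_int q * (of_real pi * 2))) = 1" by (rule exp_2pi_1_int)
  finally show ?thesis by simp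
qed

lemma cont_value:
  assumes k: "k \<in> HH"
  shows "of_real (1/4) * (eK k 2 * eK k 3 * eK k 4 + eK k 1 * eK k 3 * eK k 4 + eK k 1 * eK k 2 * eK k 4 + eK k 1 * eK k 2 * eK k 3)
         = (if k = 0 then 1 else (0::complex))"
proof -
  have ks: "k$1 + k$2 + k$3 + k$4 = 0" using k by (simp add: HH_iff)
  have kz: "k = 0 \<longleftrightarrow> k$1 = 0 \<and> k$2 = 0 \<and> k$3 = 0 \<and> k$4 = 0"
    unfolding vec_eq_iff forall_4 by simp
  obtain q where q: "\<And>i. k$i = k$1 + 4 * q i"
  proof -
    have "\<forall>i. \<exists>q. k$i = k$1 + 4 * q"
    proof
      fix i have "4 dvd (k$i - k$1)" using HH_dvd[OF k] .
      then obtain q where "k$i - k$1 = 4 * q" by (elim dvdE)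
      thus "\<exists>q. k$i = k$1 + 4 * q" by (intro exI[of _ q]) simp
    qed
    thus ?thesis using that by metis
  qed
  show ?thesis
  proof (cases "4 dvd k$1")
    case True
    then obtain r where r: "k$1 = 4 * r" by (elim dvdE)
    have e: "eK k i = (if k$i = 0 then 1 else 0)" for i
    proof (cases "k$i = 0")
      case True thus ?thesis by (simp add: Eint_def)
    next
      case False
      have "exp (\<i> * of_real (pi / 2 * of_int (k$i))) = exp (\<i> * of_real (pi / 2 * of_int 0))"
        by (rule exp_pi2_shift[of _ _ "r + q i"]) (simp add: q[of i] r algebra_simps)
      thus ?thesis using False by (simp add: Eint_def)
    qed
    show ?thesis unfolding e kz using ks
      by (cases "k$1 = 0"; cases "k$2 = 0"; cases "k$3 = 0"; cases "k$4 = 0") simp_all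
  next
    case False
    define \<omega> where "\<omega> = exp (\<i> * of_real (pi / 2 * of_int (k$1)))"
    define B where "B = (\<omega> - 1) / (\<i> * of_real (pi / 2))"
    have nz: "k$i \<noteq> 0" for i
    proof
      assume "k$i = 0"
      hence "k$1 = 4 * (- q i)" using q[of i] by simp
      thus False using False by simp
    qed
    have e: "eK k i = B / of_int (k$i)" for i
    proof -
      have "exp (\<i> * of_real (pi / 2 * of_int (k$i))) = \<omega>"
        unfolding \<omega>_def by (rule exp_pi2_shift[of _ _ "q i"]) (rule q)
      thus ?thesis using nz[of i] by (simp add: Eint_def B_def)
    qed
    have "eK k 2 * eK k 3 * eK k 4 + eK k 1 * eK k 3 * eK k 4 + eK k 1 * eK k 2 * eK k 4 + eK k 1 * eK k 2 * eK k 3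
       = B^3 * (of_int (k$1 + k$2 + k$3 + k$4)) / (of_int (k$1) * of_int (k$2) * of_int (k$3) * of_int (k$4))"
      unfolding e using nz[of 1] nz[of 2] nz[of 3] nz[of 4] by (simp add: field_simps power3_eq_cube)
    also have "\<dots> = 0" using ks by simp
    finally show ?thesis using nz[of 1] kz by simp
  qed
qed


lemma cont_main:
  assumes "k \<in> HH"
  shows "((\<lambda>x. phi k (liftH x)) has_integral (if k = 0 then 1 else 0)) {x. liftH x \<in> OmegaH}"
  using cont_has_integral[OF assms] unfolding cont_value[OF assms] .

theorem theorem3p16:
  fixes n :: nat and f :: "real^4 \<Rightarrow> complex"
  assumes "n \<ge> 1" and "f \<in> Tm (2 * n - 1)"
  shows "intH f / 2 =
    (\<Sum>j\<in>Hstar n. complex_of_real (cw n j) * f (scaleH n j)) / (4 * of_nat n ^ 3)"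
proof -
  have n: "n \<ge> 1" by fact
  let ?K = "Hstar (2 * n - 1)"
  obtain a where f: "f = (\<lambda>t. \<Sum>k\<in>?K. a k * phi k t)" using assms(2) unfolding Tm_def by blast
  have finK: "finite ?K" by (rule finite_Hstar)
  define A where "A = (\<Sum>k\<in>?K. a k * (if k = 0 then 1 else 0))"
  have KH: "k \<in> HH" if "k \<in> ?K" for k using that by (simp add: Hstar_iff)
  have "((\<lambda>x. \<Sum>k\<in>?K. phi k (liftH x) * a k) has_integral (\<Sum>k\<in>?K. (if k = 0 then 1 else 0) * a k)) {x. liftH x \<in> OmegaH}"
    by (rule has_integral_sum[OF finK]) (rule has_integral_mult_left[OF cont_main[OF KH]])
  hence "((\<lambda>x. f (liftH x)) has_integral A) {x. liftH x \<in> OmegaH}"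
    unfolding f A_def by (simp add: mult.commute)
  hence L: "intH f / 2 = A" unfolding intH_def by (simp add: integral_unique)
  have "(\<Sum>j\<in>Hstar n. complex_of_real (cw n j) * f (scaleH n j))
      = (\<Sum>j\<in>Hstar n. \<Sum>k\<in>?K. a k * (complex_of_real (cw n j) * phi k (scaleH n j)))"
    unfolding f by (simp add: sum_distrib_left mult.left_commute)
  also have "\<dots> = (\<Sum>k\<in>?K. a k * (\<Sum>j\<in>Hstar n. complex_of_real (cw n j) * phi k (scaleH n j)))"
    by (subst sum.swap) (simp add: sum_distrib_left)
  also have "\<dots> = (\<Sum>k\<in>?K. a k * (if k = 0 then 4 * of_nat n ^ 3 else 0))"
    by (rule sum.cong[OF refl]) (simp add: discrete_main[OF n])
  also have "\<dots> = 4 * of_nat n ^ 3 * A"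
    unfolding A_def by (simp add: sum_distrib_left if_distrib mult.commute cong: if_cong)
  finally have R: "(\<Sum>j\<in>Hstar n. complex_of_real (cw n j) * f (scaleH n j)) = 4 * of_nat n ^ 3 * A" .
  have nz: "(4 * of_nat n ^ 3 :: complex) \<noteq> 0" using n by simp
  show ?thesis unfolding L R using nz by simp
qed


end
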